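(* Let $f\ge 0$ be an integer and let $\mathcal{G}=(\mathcal{V},\mathcal{E})$ be a digraph with $n$ nodes. Consider the synchronous second-order agent network described in the context, in which every normal agent uses the DP-MSR algorithm with parameter $f$, and suppose $T>0$ and $\alpha>0$ satisfy $1+\frac{T^2}{2}\le \alpha T\le 2-\frac{T^2}{2}$. Then, under the $f$-total malicious model, the network reaches resilient consensus if and only if $\mathcal{G}$ is $(f+1,f+1)$-robust. Moreover, in that case the safety interval can be taken to be $$\mathcal{S}=\Big[\min_{i\notin\mathcal{M}}\hat{x}_i[0]+\min\Big\{0,\min_{i\notin\mathcal{M}}\big(T-\tfrac{\alpha T^2}{2}\big)v_i[0]\Big\},\ \max_{i\notin\mathcal{M}}\hat{x}_i[0]+\max\Big\{0,\max_{i\notin\mathcal{M}}\big(T-\tfrac{\alpha T^2}{2}\big)v_i[0]\Big\}\Big].$$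
   Context: Graphs. A digraph $\mathcal{G}=(\mathcal{V},\mathcal{E})$ has node set $\mathcal{V}=\{1,\dots,n\}$, $n>1$, and edge set $\mathcal{E}\subseteq\mathcal{V}\times\mathcal{V}$ without self-loops; $(j,i)\in\mathcal{E}$ means node $i$ receives information from node $j$. The neighbor set of $i$ is $\mathcal{N}_i=\{j:(j,i)\in\mathcal{E}\}$. For $\mathcal{S}'\subseteq\mathcal{V}$ and integer $r$, let $\mathcal{X}^r_{\mathcal{S}'}$ be the set of nodes in $\mathcal{S}'$ having at least $r$ in-neighbors outside $\mathcal{S}'$. The digraph is $(r,s)$-robust if for every pair of nonempty disjoint subsets $\mathcal{S}_1,\mathcal{S}_2\subset\mathcal{V}$ at least one holds: (1) $\mathcal{X}^r_{\mathcal{S}_1}=\mathcal{S}_1$; (2) $\mathcal{X}^r_{\mathcal{S}_2}=\mathcal{S}_2$; (3) $|\mathcal{X}^r_{\mathcal{S}_1}|+|\mathcal{X}^r_{\mathcal{S}_2}|\ge s$. A graph is $r$-robust if it is $(r,1)$-robust. Weights. Fix $\gamma>0$ and weights $a_{ij}\in[\gamma,1)$ for $(j,i)\in\mathcal{E}$ with $\sum_{j\in\mathcal{N}_i}a_{ij}\le 1$ for every $i$. Agents. Each agent $i$ has position $\hat{x}_i[k]\in\mathbb{R}$ (position minus a constant formation offset) and velocity $v_i[k]\in\mathbb{R}$, $k\in\mathbb{Z}_+$, with sampled double-integrator dynamics $\hat{x}_i[k+1]=\hat{x}_i[k]+Tv_i[k]+\frac{T^2}{2}u_i[k]$, $v_i[k+1]=v_i[k]+Tu_i[k]$,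 where $T>0$ is the sampling period. A subset $\mathcal{M}\subset\mathcal{V}$ of agents is malicious: their inputs $u_i[k]$ are arbitrary (they may know everything, including other agents' states, and may collude). All other agents are normal and use $u_i[k]=-\sum_{j\in\mathcal{N}_i}a_{ij}[k](\hat{x}_i[k]-\hat{x}_j[k])-\alpha v_i[k]$ with $\alpha>0$, where $a_{ij}[k]$ is given by the DP-MSR algorithm. DP-MSR algorithm (parameter $f$), synchronous: at each time $k$, each normal agent $i$ considers the relative positions $\hat{x}_j[k]-\hat{x}_i[k]$, $j\in\mathcal{N}_i$. If fewer than $f$ neighbors have relative value $\ge 0$, it ignores all of those neighbors; otherwise it ignores $f$ neighbors with the largest relative values. Similarly, if fewer than $f$ neighbors have relative value $\le 0$, it ignores all of those; otherwise it ignores $f$ neighbors with the smallest relative values. Then $a_{ij}[k]=0$ for ignored neighbors $j$ and $a_{ij}[k]=a_{ij}$ for the other neighbors. Malicious models. The network is $f$-total malicious if $|\mathcal{M}|\le f$; it is $f$-local malicious if $|\mathcal{N}_i\cap\mathcal{M}|\le f$ for every normal agent $i$. Resilient consensus. The network reaches resilient consensus if for every admissible malicious set $\mathcal{M}$ (under the model considered), all initial positions and velocities, and all malicious inputs: (Safety) there is a bounded interval $\mathcal{S}$ depending only on the initial positions and velocities of the normal agents with $\hat{x}_i[k]\in\mathcal{S}$ for all normal $i$ and all $k\in\mathbb{Z}_+$; (Agreement) there exists $c\in\mathcal{S}$ with $\lim_{k\to\infty}\hat{x}_i[k]=c$ and $\lim_{k\to\infty}v_i[k]=0$ for all normal $i$.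 *)

theory Defs
  imports "HOL-Analysis.Analysis"
begin

text \<open>Edge (j,i) in E means node i receives information from node j.\<close>

definition in_nbrs :: "('v \<times> 'v) set \<Rightarrow> 'v \<Rightarrow> 'v set" where
  "in_nbrs E i = {j. (j, i) \<in> E}"

definition reach_set :: "('v \<times> 'v) set \<Rightarrow> nat \<Rightarrow> 'v set \<Rightarrow> 'v set" where
  "reach_set E r S = {i \<in> S. card {j. (j, i) \<in> E \<and> j \<notin> S} \<ge> r}"

definition rs_robust :: "('v \<times> 'v) set \<Rightarrow> nat \<Rightarrow> nat \<Rightarrow> bool" where
  "rs_robust E r s \<longleftrightarrow>
     (\<forall>S1 S2. S1 \<noteq> {} \<and> S2 \<noteq> {} \<and> S1 \<inter> S2 = {} \<longrightarrow>
        reach_set E r S1 = S1 \<or> reach_set E r S2 = S2 \<or>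
        card (reach_set E r S1) + card (reach_set E r S2) \<ge> s)"

text \<open>A is an admissible set of ignored neighbours with the largest relative values
  (g j = relative position of neighbour j), resp. the smallest relative values.
  Ties are resolved arbitrarily (every resolution is admissible).\<close>

definition ignored_large :: "'v set \<Rightarrow> ('v \<Rightarrow> real) \<Rightarrow> nat \<Rightarrow> 'v set \<Rightarrow> bool" where
  "ignored_large N g f A \<longleftrightarrow>
     (card {j \<in> N. g j \<ge> 0} < f \<and> A = {j \<in> N. g j \<ge> 0}) \<or>
     (card {j \<in> N. g j \<ge> 0} \<ge> f \<and> A \<subseteq> N \<and> card A = f \<and> (\<forall>a\<in>A. \<forall>b\<in>N - A. g b \<le> g a))"

definition ignored_small :: "'v set \<Rightarrow> ('v \<Rightarrow> real) \<Rightarrow> nat \<Rightarrow> 'v set \<Rightarrow> bool" where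
  "ignored_small N g f B \<longleftrightarrow>
     (card {j \<in> N. g j \<le> 0} < f \<and> B = {j \<in> N. g j \<le> 0}) \<or>
     (card {j \<in> N. g j \<le> 0} \<ge> f \<and> B \<subseteq> N \<and> card B = f \<and> (\<forall>b\<in>B. \<forall>c\<in>N - B. g b \<le> g c))"

definition dpmsr_ignored :: "('v \<times> 'v) set \<Rightarrow> nat \<Rightarrow> ('v \<Rightarrow> real) \<Rightarrow> 'v \<Rightarrow> 'v set \<Rightarrow> bool" where
  "dpmsr_ignored E f xk i R \<longleftrightarrow>
     (\<exists>A B. ignored_large (in_nbrs E i) (\<lambda>j. xk j - xk i) f A \<and>
            ignored_small (in_nbrs E i) (\<lambda>j. xk j - xk i) f B \<and> R = A \<union> B)"

text \<open>x k i = position (minus offset) of agent i at time k, v k i = velocity.\<close>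

definition execution ::
  "('v \<times> 'v) set \<Rightarrow> ('v \<Rightarrow> 'v \<Rightarrow> real) \<Rightarrow> nat \<Rightarrow> real \<Rightarrow> real \<Rightarrow> 'v set
     \<Rightarrow> (nat \<Rightarrow> 'v \<Rightarrow> real) \<Rightarrow> (nat \<Rightarrow> 'v \<Rightarrow> real) \<Rightarrow> bool" where
  "execution E a f \<alpha> T M x v \<longleftrightarrow>
     (\<forall>k i. \<exists>u::real.
        x (Suc k) i = x k i + T * v k i + T\<^sup>2 / 2 * u \<and>
        v (Suc k) i = v k i + T * u \<and>
        (i \<notin> M \<longrightarrow> (\<exists>R. dpmsr_ignored E f (x k) i R \<and>
            u = - (\<Sum>j \<in> in_nbrs E i - R. a i j * (x k i - x k j)) - \<alpha> * v k i)))"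

definition normal_part :: "'v set \<Rightarrow> ('v \<Rightarrow> real) \<Rightarrow> 'v \<Rightarrow> real" where
  "normal_part M g = (\<lambda>i. if i \<in> M then 0 else g i)"

definition safe_agree ::
  "'v set \<Rightarrow> (nat \<Rightarrow> 'v \<Rightarrow> real) \<Rightarrow> (nat \<Rightarrow> 'v \<Rightarrow> real) \<Rightarrow> real set \<Rightarrow> bool" where
  "safe_agree M x v S \<longleftrightarrow>
     bounded S \<and> is_interval S \<and>
     (\<forall>k. \<forall>i. i \<notin> M \<longrightarrow> x k i \<in> S) \<and>
     (\<exists>c\<in>S. \<forall>i. i \<notin> M \<longrightarrow> (\<lambda>k. x k i) \<longlonglongrightarrow> c \<and> (\<lambda>k. v k i) \<longlonglongrightarrow> 0)"

text \<open>The safety interval is given by a function of M and the initial positions/velocities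
  of the normal agents only.\<close>
definition resilient_consensus_total ::
  "('v \<times> 'v) set \<Rightarrow> ('v \<Rightarrow> 'v \<Rightarrow> real) \<Rightarrow> nat \<Rightarrow> real \<Rightarrow> real \<Rightarrow> bool" where
  "resilient_consensus_total E a f \<alpha> T \<longleftrightarrow>
     (\<exists>S :: 'v set \<Rightarrow> ('v \<Rightarrow> real) \<Rightarrow> ('v \<Rightarrow> real) \<Rightarrow> real set.
        \<forall>M. M \<noteq> UNIV \<and> card M \<le> f \<longrightarrow>
          (\<forall>x v. execution E a f \<alpha> T M x v \<longrightarrow>
             safe_agree M x v (S M (normal_part M (x 0)) (normal_part M (v 0)))))"

definition safety_interval ::
  "'v set \<Rightarrow> real \<Rightarrow> real \<Rightarrow> ('v \<Rightarrow> real) \<Rightarrow> ('v \<Rightarrow> real) \<Rightarrow> real set" where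
  "safety_interval M \<alpha> T x0 v0 =
     {Min {x0 i | i. i \<notin> M} + min 0 (Min {(T - \<alpha> * T\<^sup>2 / 2) * v0 i | i. i \<notin> M})
      .. Max {x0 i | i. i \<notin> M} + max 0 (Max {(T - \<alpha> * T\<^sup>2 / 2) * v0 i | i. i \<notin> M})}"

end

theory Submission
  imports Defs
begin


lemma top_exists:
  fixes g :: "'v \<Rightarrow> real"
  assumes "finite N" "k \<le> card N"
  shows "\<exists>A\<subseteq>N. card A = k \<and> (\<forall>a\<in>A. \<forall>b\<in>N - A. g b \<le> g a)"
  using assms(2)
proof (induction k)
  case 0 then show ?case by auto
next
  case (Suc k)
  then obtain A where A: "A \<subseteq> N" "card A = k" "\<forall>a\<in>A. \<forall>b\<in>N - A. g b \<le> g a" by auto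
  have fin: "finite (N - A)" using assms(1) by auto
  have ne: "N - A \<noteq> {}"
  proof
    assume "N - A = {}" then have "N \<subseteq> A" by auto
    then have "card N \<le> card A" using assms(1) A(1) card_mono finite_subset by blast
    then show False using Suc.prems A(2) by simp
  qed
  have "Max (g ` (N - A)) \<in> g ` (N - A)" using fin ne by simp
  then obtain b where b1: "b \<in> N - A" "g b = Max (g ` (N - A))" by auto
  have b2: "\<forall>c\<in>N - A. g c \<le> g b" using fin b1(2) by simp
  note b = b1(1) b2
  have "card (insert b A) = Suc k" using A b assms(1) finite_subset by fastforce
  moreover have "insert b A \<subseteq> N" using A b by auto
  moreover have "\<forall>a\<in>insert b A. \<forall>c\<in>N - insert b A. g c \<le> g a" using A b by auto
  ultimately show ?case by blast
qed

lemma ignored_large_exists: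
  assumes "finite N" shows "\<exists>A. ignored_large N g f A"
proof (cases "card {j \<in> N. g j \<ge> 0} < f")
  case True then show ?thesis unfolding ignored_large_def by auto
next
  case False
  have "card {j \<in> N. g j \<ge> 0} \<le> card N" using assms by (intro card_mono) auto
  then obtain A where "A\<subseteq>N" "card A = f" "\<forall>a\<in>A. \<forall>b\<in>N - A. g b \<le> g a"
    using top_exists[OF assms, of f g] False by auto
  then show ?thesis using False unfolding ignored_large_def by auto
qed

lemma ignored_small_exists:
  assumes "finite N" shows "\<exists>B. ignored_small N g f B"
proof (cases "card {j \<in> N. g j \<le> 0} < f")
  case True then show ?thesis unfolding ignored_small_def by auto
next
  case False
  have "card {j \<in> N. g j \<le> 0} \<le> card N" using assms by (intro card_mono) auto
  then obtain A where "A\<subseteq>N" "card A = f" "\<forall>a\<in>A. \<forall>b\<in>N - A. (\<lambda>j. - g j) b \<le> (\<lambda>j. - g j) a"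
    using top_exists[OF assms, of f "\<lambda>j. - g j"] False by auto
  then show ?thesis using False unfolding ignored_small_def by auto
qed

lemma dpmsr_exists:
  fixes E :: "('v::finite \<times> 'v) set"
  shows "\<exists>R. dpmsr_ignored E f xk i R"
proof -
  have fin: "finite (in_nbrs E i)" by simp
  obtain A where "ignored_large (in_nbrs E i) (\<lambda>j. xk j - xk i) f A"
    using ignored_large_exists[OF fin] by blast
  moreover obtain B where "ignored_small (in_nbrs E i) (\<lambda>j. xk j - xk i) f B"
    using ignored_small_exists[OF fin] by blast
  ultimately show ?thesis unfolding dpmsr_ignored_def by blast
qed

lemma large_sub: "ignored_large N g f A \<Longrightarrow> A \<subseteq> N"
  unfolding ignored_large_def by auto
lemma small_sub: "ignored_small N g f B \<Longrightarrow> B \<subseteq> N"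
  unfolding ignored_small_def by auto

lemma large_used:
  assumes "ignored_large N g f A" "j \<in> N" "j \<notin> A" "g j \<ge> 0"
  shows "card A = f \<and> (\<forall>a\<in>A. g j \<le> g a)"
  using assms unfolding ignored_large_def by auto

lemma small_used:
  assumes "ignored_small N g f B" "j \<in> N" "j \<notin> B" "g j \<le> 0"
  shows "card B = f \<and> (\<forall>b\<in>B. g b \<le> g j)"
  using assms unfolding ignored_small_def by auto

lemma pull_low:
  assumes fin: "finite N" and L: "ignored_large N g f A" and S: "ignored_small N g f B"
    and Low: "Low \<subseteq> N" "f + 1 \<le> card Low" "\<forall>j\<in>Low. g j < 0"
  shows "\<exists>j\<in>Low. j \<notin> A \<union> B"
proof (rule ccontr)
  assume "\<not> ?thesis"
  then have LR: "Low \<subseteq> A \<union> B" by auto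
  have "Low \<inter> A = {}"
  proof (rule ccontr)
    assume "Low \<inter> A \<noteq> {}"
    then obtain j where j: "j \<in> Low" "j \<in> A" by auto
    show False
    proof (cases "card {j \<in> N. g j \<ge> 0} < f")
      case True
      then have "A = {j \<in> N. g j \<ge> 0}" using L unfolding ignored_large_def by auto
      then show False using j Low(3) by auto
    next
      case False
      then have cA: "card A = f" and AA: "\<forall>a\<in>A. \<forall>b\<in>N - A. g b \<le> g a"
        using L unfolding ignored_large_def by auto
      have "{j \<in> N. g j \<ge> 0} \<subseteq> A - {j}"
      proof
        fix b assume b: "b \<in> {j \<in> N. g j \<ge> 0}"
        have "b \<in> A"
        proof (rule ccontr)
          assume "b \<notin> A" then have "g b \<le> g j" using AA j b by auto
          then show False using b Low(3) j by auto
        qed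
        moreover have "b \<noteq> j" using b Low(3) j by auto
        ultimately show "b \<in> A - {j}" by auto
      qed
      then have "card {j \<in> N. g j \<ge> 0} \<le> card (A - {j})"
        using fin L by (intro card_mono) (auto dest: large_sub intro: finite_subset)
      also have "\<dots> = f - 1" using cA j by (simp add: card_Diff_singleton)
      finally have "card {j \<in> N. g j \<ge> 0} \<le> f - 1" .
      moreover have "f \<ge> 1"
      proof -
        have "finite A" using fin large_sub[OF L] finite_subset by blast
        then have "card A > 0" using j(2) card_gt_0_iff by blast
        then show ?thesis using cA by simp
      qed
      ultimately show False using False by linarith
    qed
  qed
  then have LB: "Low \<subseteq> B" using LR by auto
  have finB: "finite B" using S fin by (auto dest: small_sub intro: finite_subset)
  show False
  proof (cases "card {j \<in> N. g j \<le> 0} < f")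
    case True
    then have "B = {j \<in> N. g j \<le> 0}" using S unfolding ignored_small_def by auto
    then have "card Low \<le> card {j \<in> N. g j \<le> 0}" using LB finB by (intro card_mono) auto
    then show False using True Low(2) by simp
  next
    case False
    then have "card B = f" using S unfolding ignored_small_def by auto
    moreover have "card Low \<le> card B" using LB finB by (intro card_mono) auto
    ultimately show False using Low(2) by simp
  qed
qed

lemma large_neg: "ignored_large N g f A \<Longrightarrow> ignored_small N (\<lambda>j. - g j) f A"
  unfolding ignored_large_def ignored_small_def by auto
lemma small_neg: "ignored_small N g f A \<Longrightarrow> ignored_large N (\<lambda>j. - g j) f A"
  unfolding ignored_large_def ignored_small_def by auto

lemma pull_high:
  assumes fin: "finite N" and L: "ignored_large N g f A" and S: "ignored_small N g f B"
    and High: "High \<subseteq> N" "f + 1 \<le> card High" "\<forall>j\<in>High. g j > 0"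
  shows "\<exists>j\<in>High. j \<notin> A \<union> B"
proof -
  have "\<exists>j\<in>High. j \<notin> B \<union> A"
    using pull_low[OF fin small_neg[OF S] large_neg[OF L] High(1,2)] High(3) by auto
  then show ?thesis by auto
qed

lemma R_nonempty:
  assumes fin: "finite N" and f1: "f \<ge> 1" and ne: "N \<noteq> {}"
    and L: "ignored_large N g f A" and S: "ignored_small N g f B"
  shows "A \<union> B \<noteq> {}"
proof (cases "card {j \<in> N. g j \<ge> 0} < f")
  case False
  then have "card A = f" using L unfolding ignored_large_def by auto
  then show ?thesis using f1 by auto
next
  case True
  then have A: "A = {j \<in> N. g j \<ge> 0}" using L unfolding ignored_large_def by auto
  show ?thesis
  proof (cases "A = {}")
    case False then show ?thesis by auto
  next
    case True
    then have allneg: "\<forall>j\<in>N. g j < 0" using A by force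
    show ?thesis
    proof (cases "card {j \<in> N. g j \<le> 0} < f")
      case True
      then have "B = {j \<in> N. g j \<le> 0}" using S unfolding ignored_small_def by auto
      then show ?thesis using allneg ne by force
    next
      case False
      then have "card B = f" using S unfolding ignored_small_def by auto
      then show ?thesis using f1 by auto
    qed
  qed
qed

lemma f0_empty_large: "finite N \<Longrightarrow> ignored_large N g 0 A \<Longrightarrow> A = {}"
proof -
  assume a: "finite N" "ignored_large N g 0 A"
  then have "A \<subseteq> N" "card A = 0" unfolding ignored_large_def by auto
  then show "A = {}" using a(1) by (meson card_0_eq finite_subset)
qed
lemma f0_empty_small: "finite N \<Longrightarrow> ignored_small N g 0 A \<Longrightarrow> A = {}"
proof -
  assume a: "finite N" "ignored_small N g 0 A"
  then have "A \<subseteq> N" "card A = 0" unfolding ignored_small_def by auto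
  then show "A = {}" using a(1) by (meson card_0_eq finite_subset)
qed


locale net =
  fixes E :: "('v::finite \<times> 'v) set" and a :: "'v \<Rightarrow> 'v \<Rightarrow> real"
    and \<gamma> T \<alpha> :: real and f :: nat and M :: "'v set" and x v :: "nat \<Rightarrow> 'v \<Rightarrow> real"
  assumes gamma_pos: "\<gamma> > 0"
    and weights: "\<forall>i j. (j, i) \<in> E \<longrightarrow> \<gamma> \<le> a i j \<and> a i j < 1"
    and weight_sum: "\<forall>i. (\<Sum>j \<in> in_nbrs E i. a i j) \<le> 1"
    and T_pos: "T > 0" and alpha_pos: "\<alpha> > 0"
    and cond_lo: "1 + T\<^sup>2 / 2 \<le> \<alpha> * T"
    and cond_hi: "\<alpha> * T \<le> 2 - T\<^sup>2 / 2"
    and exec: "execution E a f \<alpha> T M x v"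
    and Mcard: "card M \<le> f" and MU: "M \<noteq> UNIV"
begin

definition "h = T\<^sup>2 / 2"
definition "cc = T - \<alpha> * T\<^sup>2 / 2"

lemma h_pos: "h > 0" using T_pos unfolding h_def by simp
lemma h_le: "h \<le> 1/2" using cond_lo cond_hi unfolding h_def by simp
lemma p1_base: "2 - \<alpha> * T \<ge> h" using cond_hi unfolding h_def by simp
lemma p0_base: "\<alpha> * T - 1 \<ge> h" using cond_lo unfolding h_def by simp
lemma cc_eq: "cc = T * (2 - \<alpha> * T) / 2" unfolding cc_def by (simp add: power2_eq_square algebra_simps)
lemma cc_pos: "cc > 0"
proof -
  have "0 < T * (2 - \<alpha> * T)" using p1_base h_pos T_pos by (intro mult_pos_pos) auto
  then show ?thesis using cc_eq by simp
qed
lemma cc_h: "cc = T - \<alpha> * h" unfolding cc_def h_def by simp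

definition uu where "uu k i = (SOME u. x (Suc k) i = x k i + T * v k i + T\<^sup>2 / 2 * u \<and>
        v (Suc k) i = v k i + T * u \<and>
        (i \<notin> M \<longrightarrow> (\<exists>R. dpmsr_ignored E f (x k) i R \<and>
            u = - (\<Sum>j \<in> in_nbrs E i - R. a i j * (x k i - x k j)) - \<alpha> * v k i)))"

lemma uu: "x (Suc k) i = x k i + T * v k i + T\<^sup>2 / 2 * uu k i \<and>
        v (Suc k) i = v k i + T * uu k i \<and>
        (i \<notin> M \<longrightarrow> (\<exists>R. dpmsr_ignored E f (x k) i R \<and>
            uu k i = - (\<Sum>j \<in> in_nbrs E i - R. a i j * (x k i - x k j)) - \<alpha> * v k i))"
  unfolding uu_def by (rule someI_ex) (use exec in \<open>auto simp: execution_def\<close>)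

definition RR where "RR k i = (SOME R. dpmsr_ignored E f (x k) i R \<and>
            uu k i = - (\<Sum>j \<in> in_nbrs E i - R. a i j * (x k i - x k j)) - \<alpha> * v k i)"

lemma RR: "i \<notin> M \<Longrightarrow> dpmsr_ignored E f (x k) i (RR k i) \<and>
            uu k i = - (\<Sum>j \<in> in_nbrs E i - RR k i. a i j * (x k i - x k j)) - \<alpha> * v k i"
  unfolding RR_def by (rule someI_ex) (use uu in blast)

definition "U k i = in_nbrs E i - RR k i"
definition "sig k i = (\<Sum>j\<in>U k i. a i j)"
definition "SS k i = (\<Sum>j\<in>U k i. a i j * x k j)"

lemma U_sub: "U k i \<subseteq> in_nbrs E i" unfolding U_def by auto
lemma fin_U: "finite (U k i)" by simp
lemma a_ge: "j \<in> in_nbrs E i \<Longrightarrow> \<gamma> \<le> a i j" using weights unfolding in_nbrs_def by auto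
lemma a_nn: "j \<in> in_nbrs E i \<Longrightarrow> 0 \<le> a i j" using a_ge gamma_pos by force

lemma sig_nn: "0 \<le> sig k i" unfolding sig_def by (intro sum_nonneg) (meson a_nn U_sub subsetD)
lemma sig_le: "sig k i \<le> 1"
proof -
  have "sig k i \<le> (\<Sum>j \<in> in_nbrs E i. a i j)"
    unfolding sig_def using U_sub a_nn by (intro sum_mono2) auto
  then show ?thesis using weight_sum by (meson order_trans)
qed

lemma u_eq: "i \<notin> M \<Longrightarrow> uu k i = -(sig k i * x k i - SS k i) - \<alpha> * v k i"
proof -
  assume i: "i \<notin> M"
  have "(\<Sum>j \<in> U k i. a i j * (x k i - x k j)) = sig k i * x k i - SS k i"
  proof -
    have "(\<Sum>j\<in>U k i. a i j * x k i) = sig k i * x k i" unfolding sig_def by (simp add: sum_distrib_right)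
    then show ?thesis unfolding SS_def by (simp add: right_diff_distrib sum_subtractf)
  qed
  then show ?thesis using RR[OF i, of k] unfolding U_def by simp
qed

lemma xstep: "x (Suc k) i = x k i + T * v k i + h * uu k i" using uu unfolding h_def by blast
lemma vstep: "v (Suc k) i = v k i + T * uu k i" using uu by blast

lemma rec1: "i \<notin> M \<Longrightarrow> x (Suc k) i = (1 - h * sig k i) * x k i + h * SS k i + cc * v k i"
proof -
  assume i: "i \<notin> M"
  show ?thesis using xstep[of k i] u_eq[OF i, of k] unfolding cc_h
    by (simp add: algebra_simps)
qed

lemma rec2: "i \<notin> M \<Longrightarrow> x (Suc (Suc k)) i =
    (2 - \<alpha> * T - h * sig (Suc k) i) * x (Suc k) i + h * SS (Suc k) i
    + (\<alpha> * T - 1 - h * sig k i) * x k i + h * SS k i"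
proof -
  assume i: "i \<notin> M"
  define s0 where "s0 = sig k i * x k i - SS k i"
  define s1 where "s1 = sig (Suc k) i * x (Suc k) i - SS (Suc k) i"
  have ha: "h * \<alpha> = \<alpha> * T\<^sup>2 / 2" unfolding h_def by simp
  have e1: "x (Suc k) i = x k i + cc * v k i - h * s0"
    using xstep[of k i] u_eq[OF i, of k] unfolding cc_h s0_def by (simp add: algebra_simps)
  have e2: "v (Suc k) i = (1 - \<alpha> * T) * v k i - T * s0"
    using vstep[of k i] u_eq[OF i, of k] unfolding s0_def by (simp add: algebra_simps)
  have e3: "x (Suc (Suc k)) i = x (Suc k) i + cc * v (Suc k) i - h * s1"
    using xstep[of "Suc k" i] u_eq[OF i, of "Suc k"] unfolding cc_h s1_def by (simp add: algebra_simps)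
  have key: "(1 - \<alpha> * T) * h - cc * T = - h"
    unfolding h_def cc_def by (simp add: power2_eq_square field_simps)
  have "x (Suc (Suc k)) i = x (Suc k) i + (1 - \<alpha> * T) * (cc * v k i) - cc * T * s0 - h * s1"
    using e3 e2 by (simp add: algebra_simps)
  also have "cc * v k i = x (Suc k) i - x k i + h * s0" using e1 by simp
  finally have "x (Suc (Suc k)) i = x (Suc k) i + (1 - \<alpha> * T) * (x (Suc k) i - x k i)
       + ((1 - \<alpha> * T) * h - cc * T) * s0 - h * s1" by (simp add: algebra_simps)
  then have "x (Suc (Suc k)) i = x (Suc k) i + (1 - \<alpha> * T) * (x (Suc k) i - x k i)
       - h * s0 - h * s1" using key by simp
  then show ?thesis unfolding s0_def s1_def by (simp add: algebra_simps)
qed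

definition "maxN k = Max ((\<lambda>j. x k j) ` (- M))"
definition "minN k = Min ((\<lambda>j. x k j) ` (- M))"

lemma NM_ne: "- M \<noteq> {}" using MU by auto
lemma maxN_ge: "i \<notin> M \<Longrightarrow> x k i \<le> maxN k" unfolding maxN_def by (intro Max_ge) auto
lemma minN_le: "i \<notin> M \<Longrightarrow> minN k \<le> x k i" unfolding minN_def by (intro Min_le) auto
lemma maxN_le_iff: "maxN k \<le> W \<longleftrightarrow> (\<forall>i. i \<notin> M \<longrightarrow> x k i \<le> W)"
  unfolding maxN_def using NM_ne by (subst Max_le_iff) auto
lemma minN_ge_iff: "W \<le> minN k \<longleftrightarrow> (\<forall>i. i \<notin> M \<longrightarrow> W \<le> x k i)"
  unfolding minN_def using NM_ne by (subst Min_ge_iff) auto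
lemma maxN_in: "\<exists>i. i \<notin> M \<and> x k i = maxN k"
proof -
  have "maxN k \<in> (\<lambda>j. x k j) ` (- M)" unfolding maxN_def using NM_ne by (intro Max_in) auto
  then show ?thesis by auto
qed
lemma minN_in: "\<exists>i. i \<notin> M \<and> x k i = minN k"
proof -
  have "minN k \<in> (\<lambda>j. x k j) ` (- M)" unfolding minN_def using NM_ne by (intro Min_in) auto
  then show ?thesis by auto
qed

lemma normal_in_f_set:
  assumes "card A = f" "j \<in> M" "j \<notin> A"
  shows "\<exists>l\<in>A. l \<notin> M"
proof (rule ccontr)
  assume "\<not> ?thesis"
  then have "insert j A \<subseteq> M" using assms by auto
  then have "card (insert j A) \<le> card M" by (intro card_mono) auto
  moreover have "card (insert j A) = Suc f" using assms by (simp add: card_insert_disjoint)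
  ultimately show False using Mcard by simp
qed

lemma used_range:
  assumes i: "i \<notin> M" and j: "j \<in> U k i"
  shows "minN k \<le> x k j \<and> x k j \<le> maxN k"
proof -
  obtain A B where L: "ignored_large (in_nbrs E i) (\<lambda>j. x k j - x k i) f A"
    and S: "ignored_small (in_nbrs E i) (\<lambda>j. x k j - x k i) f B" and R: "RR k i = A \<union> B"
    using RR[OF i, of k] unfolding dpmsr_ignored_def by blast
  have jN: "j \<in> in_nbrs E i" and jA: "j \<notin> A" and jB: "j \<notin> B" using j R unfolding U_def by auto
  have up: "x k j \<le> maxN k"
  proof (cases "x k j \<le> x k i")
    case True then show ?thesis using maxN_ge[OF i, of k] by simp
  next
    case False
    then have "card A = f \<and> (\<forall>l\<in>A. x k j - x k i \<le> x k l - x k i)"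
      using large_used[OF L jN jA] by simp
    then have cA: "card A = f" and le: "\<forall>l\<in>A. x k j \<le> x k l" by auto
    show ?thesis
    proof (cases "j \<in> M")
      case False then show ?thesis using maxN_ge by simp
    next
      case True
      then obtain l where "l \<in> A" "l \<notin> M" using normal_in_f_set[OF cA True jA] by blast
      then show ?thesis using le maxN_ge[of l k] by force
    qed
  qed
  have lo: "minN k \<le> x k j"
  proof (cases "x k i \<le> x k j")
    case True then show ?thesis using minN_le[OF i, of k] by simp
  next
    case False
    then have "card B = f \<and> (\<forall>l\<in>B. x k l - x k i \<le> x k j - x k i)"
      using small_used[OF S jN jB] by simp
    then have cB: "card B = f" and le: "\<forall>l\<in>B. x k l \<le> x k j" by auto
    show ?thesis
    proof (cases "j \<in> M")
      case False then show ?thesis using minN_le by simp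
    next
      case True
      then obtain l where "l \<in> B" "l \<notin> M" using normal_in_f_set[OF cB True jB] by blast
      then show ?thesis using le minN_le[of l k] by force
    qed
  qed
  show ?thesis using up lo by simp
qed

definition "p1 k i = 2 - \<alpha> * T - h * sig k i"
definition "p0 k i = \<alpha> * T - 1 - h * sig k i"

lemma p1_nn: "p1 k i \<ge> h * (1 - sig k i)" unfolding p1_def using p1_base by (simp add: algebra_simps)
lemma p0_nn: "p0 k i \<ge> h * (1 - sig k i)" unfolding p0_def using p0_base by (simp add: algebra_simps)
lemma p1_ge0: "p1 k i \<ge> 0" using p1_nn[of k i] sig_le[of k i] h_pos
  by (meson diff_ge_0_iff_ge less_eq_real_def mult_nonneg_nonneg order_trans)
lemma p0_ge0: "p0 k i \<ge> 0" using p0_nn[of k i] sig_le[of k i] h_pos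
  by (meson diff_ge_0_iff_ge less_eq_real_def mult_nonneg_nonneg order_trans)

lemma decomp:
  assumes i: "i \<notin> M"
  shows "x (Suc (Suc k)) i - W = p1 (Suc k) i * (x (Suc k) i - W)
      + h * (\<Sum>j\<in>U (Suc k) i. a i j * (x (Suc k) j - W))
      + p0 k i * (x k i - W) + h * (\<Sum>j\<in>U k i. a i j * (x k j - W))"
proof -
  have s: "\<And>k. (\<Sum>j\<in>U k i. a i j * (x k j - W)) = SS k i - sig k i * W"
    unfolding SS_def sig_def by (simp add: right_diff_distrib sum_subtractf sum_distrib_right)
  show ?thesis unfolding s p1_def p0_def rec2[OF i] by (simp add: algebra_simps)
qed

lemma sum_le_member:
  fixes t :: "'a \<Rightarrow> real"
  assumes "finite S" "j \<in> S" "\<forall>l\<in>S. t l \<le> 0"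
  shows "sum t S \<le> t j"
proof -
  have "sum t S = t j + sum t (S - {j})" using assms by (simp add: sum.remove)
  moreover have "sum t (S - {j}) \<le> 0" using assms by (intro sum_nonpos) auto
  ultimately show ?thesis by simp
qed

lemma upper_bound:
  assumes i: "i \<notin> M" and W1: "\<forall>j. j \<notin> M \<longrightarrow> x (Suc k) j \<le> W"
    and W0: "\<forall>j. j \<notin> M \<longrightarrow> x k j \<le> W"
  shows "x (Suc (Suc k)) i \<le> W - p1 (Suc k) i * (W - x (Suc k) i)"
    and "x (Suc (Suc k)) i \<le> W - p0 k i * (W - x k i)"
    and "j \<in> U (Suc k) i \<Longrightarrow> x (Suc (Suc k)) i \<le> W - h * a i j * (W - x (Suc k) j)"
    and "j \<in> U k i \<Longrightarrow> x (Suc (Suc k)) i \<le> W - h * a i j * (W - x k j)"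
    and "x (Suc (Suc k)) i \<le> W"
proof -
  have m1: "maxN (Suc k) \<le> W" using W1 maxN_le_iff by blast
  have m0: "maxN k \<le> W" using W0 maxN_le_iff by blast
  have t1: "\<forall>l\<in>U (Suc k) i. a i l * (x (Suc k) l - W) \<le> 0"
  proof
    fix l assume l: "l \<in> U (Suc k) i"
    have "x (Suc k) l \<le> W" using used_range[OF i l] m1 by simp
    moreover have "a i l \<ge> 0" using a_nn l U_sub by blast
    ultimately show "a i l * (x (Suc k) l - W) \<le> 0" by (simp add: mult_nonneg_nonpos)
  qed
  have t0: "\<forall>l\<in>U k i. a i l * (x k l - W) \<le> 0"
  proof
    fix l assume l: "l \<in> U k i"
    have "x k l \<le> W" using used_range[OF i l] m0 by simp
    moreover have "a i l \<ge> 0" using a_nn l U_sub by blast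
    ultimately show "a i l * (x k l - W) \<le> 0" by (simp add: mult_nonneg_nonpos)
  qed
  define A1 where "A1 = p1 (Suc k) i * (x (Suc k) i - W)"
  define A2 where "A2 = h * (\<Sum>j\<in>U (Suc k) i. a i j * (x (Suc k) j - W))"
  define A3 where "A3 = p0 k i * (x k i - W)"
  define A4 where "A4 = h * (\<Sum>j\<in>U k i. a i j * (x k j - W))"
  have D: "x (Suc (Suc k)) i - W = A1 + A2 + A3 + A4" unfolding A1_def A2_def A3_def A4_def by (rule decomp[OF i])
  have "A1 \<le> 0" unfolding A1_def using p1_ge0 W1 i by (simp add: mult_nonneg_nonpos)
  moreover have "A3 \<le> 0" unfolding A3_def using p0_ge0 W0 i by (simp add: mult_nonneg_nonpos)
  moreover have "A2 \<le> 0" unfolding A2_def using h_pos t1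
    by (intro mult_nonneg_nonpos) (auto intro: sum_nonpos)
  moreover have "A4 \<le> 0" unfolding A4_def using h_pos t0
    by (intro mult_nonneg_nonpos) (auto intro: sum_nonpos)
  ultimately have all: "A1 \<le> 0" "A2 \<le> 0" "A3 \<le> 0" "A4 \<le> 0" by auto
  show "x (Suc (Suc k)) i \<le> W - p1 (Suc k) i * (W - x (Suc k) i)"
    using D all unfolding A1_def by (simp add: algebra_simps)
  show "x (Suc (Suc k)) i \<le> W - p0 k i * (W - x k i)"
    using D all unfolding A3_def by (simp add: algebra_simps)
  show "x (Suc (Suc k)) i \<le> W" using D all by simp
  show "j \<in> U (Suc k) i \<Longrightarrow> x (Suc (Suc k)) i \<le> W - h * a i j * (W - x (Suc k) j)"
  proof -
    assume j: "j \<in> U (Suc k) i"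
    have "(\<Sum>j\<in>U (Suc k) i. a i j * (x (Suc k) j - W)) \<le> a i j * (x (Suc k) j - W)"
      using sum_le_member[OF fin_U j t1] .
    then have "A2 \<le> h * (a i j * (x (Suc k) j - W))" unfolding A2_def using h_pos by simp
    then show ?thesis using D all by (simp add: algebra_simps)
  qed
  show "j \<in> U k i \<Longrightarrow> x (Suc (Suc k)) i \<le> W - h * a i j * (W - x k j)"
  proof -
    assume j: "j \<in> U k i"
    have "(\<Sum>j\<in>U k i. a i j * (x k j - W)) \<le> a i j * (x k j - W)"
      using sum_le_member[OF fin_U j t0] .
    then have "A4 \<le> h * (a i j * (x k j - W))" unfolding A4_def using h_pos by simp
    then show ?thesis using D all by (simp add: algebra_simps)
  qed
qed

lemma lower_bound:
  assumes i: "i \<notin> M" and W1: "\<forall>j. j \<notin> M \<longrightarrow> w \<le> x (Suc k) j"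
    and W0: "\<forall>j. j \<notin> M \<longrightarrow> w \<le> x k j"
  shows "x (Suc (Suc k)) i \<ge> w + p1 (Suc k) i * (x (Suc k) i - w)"
    and "x (Suc (Suc k)) i \<ge> w + p0 k i * (x k i - w)"
    and "j \<in> U (Suc k) i \<Longrightarrow> x (Suc (Suc k)) i \<ge> w + h * a i j * (x (Suc k) j - w)"
    and "j \<in> U k i \<Longrightarrow> x (Suc (Suc k)) i \<ge> w + h * a i j * (x k j - w)"
    and "x (Suc (Suc k)) i \<ge> w"
proof -
  have m1: "w \<le> minN (Suc k)" using W1 minN_ge_iff by blast
  have m0: "w \<le> minN k" using W0 minN_ge_iff by blast
  have t1: "\<forall>l\<in>U (Suc k) i. - (a i l * (x (Suc k) l - w)) \<le> 0"
  proof
    fix l assume l: "l \<in> U (Suc k) i"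
    have "w \<le> x (Suc k) l" using used_range[OF i l] m1 by simp
    moreover have "a i l \<ge> 0" using a_nn l U_sub by blast
    ultimately show "- (a i l * (x (Suc k) l - w)) \<le> 0" by simp
  qed
  have t0: "\<forall>l\<in>U k i. - (a i l * (x k l - w)) \<le> 0"
  proof
    fix l assume l: "l \<in> U k i"
    have "w \<le> x k l" using used_range[OF i l] m0 by simp
    moreover have "a i l \<ge> 0" using a_nn l U_sub by blast
    ultimately show "- (a i l * (x k l - w)) \<le> 0" by simp
  qed
  define A1 where "A1 = p1 (Suc k) i * (x (Suc k) i - w)"
  define A2 where "A2 = h * (\<Sum>j\<in>U (Suc k) i. a i j * (x (Suc k) j - w))"
  define A3 where "A3 = p0 k i * (x k i - w)"
  define A4 where "A4 = h * (\<Sum>j\<in>U k i. a i j * (x k j - w))"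
  have D: "x (Suc (Suc k)) i - w = A1 + A2 + A3 + A4" unfolding A1_def A2_def A3_def A4_def by (rule decomp[OF i])
  have "A1 \<ge> 0" unfolding A1_def using p1_ge0 W1 i by simp
  moreover have "A3 \<ge> 0" unfolding A3_def using p0_ge0 W0 i by simp
  moreover have "(\<Sum>j\<in>U (Suc k) i. a i j * (x (Suc k) j - w)) \<ge> 0"
    using t1 by (intro sum_nonneg) auto
  then have "A2 \<ge> 0" unfolding A2_def using h_pos by simp
  moreover have "(\<Sum>j\<in>U k i. a i j * (x k j - w)) \<ge> 0"
    using t0 by (intro sum_nonneg) auto
  then have "A4 \<ge> 0" unfolding A4_def using h_pos by simp
  ultimately have all: "A1 \<ge> 0" "A2 \<ge> 0" "A3 \<ge> 0" "A4 \<ge> 0" by auto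
  show "x (Suc (Suc k)) i \<ge> w + p1 (Suc k) i * (x (Suc k) i - w)"
    using D all unfolding A1_def by (simp add: algebra_simps)
  show "x (Suc (Suc k)) i \<ge> w + p0 k i * (x k i - w)"
    using D all unfolding A3_def by (simp add: algebra_simps)
  show "x (Suc (Suc k)) i \<ge> w" using D all by simp
  show "j \<in> U (Suc k) i \<Longrightarrow> x (Suc (Suc k)) i \<ge> w + h * a i j * (x (Suc k) j - w)"
  proof -
    assume j: "j \<in> U (Suc k) i"
    have "(\<Sum>j\<in>U (Suc k) i. - (a i j * (x (Suc k) j - w))) \<le> - (a i j * (x (Suc k) j - w))"
      using sum_le_member[OF fin_U j t1] .
    then have "A2 \<ge> h * (a i j * (x (Suc k) j - w))" unfolding A2_def using h_pos
      by (simp add: sum_negf)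
    then show ?thesis using D all by (simp add: algebra_simps)
  qed
  show "j \<in> U k i \<Longrightarrow> x (Suc (Suc k)) i \<ge> w + h * a i j * (x k j - w)"
  proof -
    assume j: "j \<in> U k i"
    have "(\<Sum>j\<in>U k i. - (a i j * (x k j - w))) \<le> - (a i j * (x k j - w))"
      using sum_le_member[OF fin_U j t0] .
    then have "A4 \<ge> h * (a i j * (x k j - w))" unfolding A4_def using h_pos
      by (simp add: sum_negf)
    then show ?thesis using D all by (simp add: algebra_simps)
  qed
qed

end


context net begin

definition "Wk k = max (maxN k) (maxN (Suc k))"
definition "wk k = min (minN k) (minN (Suc k))"

lemma window_pair:
  "\<forall>i. i \<notin> M \<longrightarrow> (wk k \<le> x (k + t) i \<and> x (k + t) i \<le> Wk k \<and>
                     wk k \<le> x (Suc (k + t)) i \<and> x (Suc (k + t)) i \<le> Wk k)"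
proof (induction t)
  case 0
  show ?case
  proof (intro allI impI)
    fix i assume i: "i \<notin> M"
    show "wk k \<le> x (k + 0) i \<and> x (k + 0) i \<le> Wk k \<and> wk k \<le> x (Suc (k + 0)) i \<and> x (Suc (k + 0)) i \<le> Wk k"
      using maxN_ge[OF i, of k] maxN_ge[OF i, of "Suc k"] minN_le[OF i, of k] minN_le[OF i, of "Suc k"]
      unfolding Wk_def wk_def by auto
  qed
next
  case (Suc t)
  have W1: "\<forall>j. j \<notin> M \<longrightarrow> x (Suc (k + t)) j \<le> Wk k" and W0: "\<forall>j. j \<notin> M \<longrightarrow> x (k + t) j \<le> Wk k"
    and w1: "\<forall>j. j \<notin> M \<longrightarrow> wk k \<le> x (Suc (k + t)) j" and w0: "\<forall>j. j \<notin> M \<longrightarrow> wk k \<le> x (k + t) j"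
    using Suc.IH by auto
  show ?case
  proof (intro allI impI)
    fix i assume i: "i \<notin> M"
    have "x (Suc (Suc (k + t))) i \<le> Wk k" using upper_bound(5)[OF i W1 W0] .
    moreover have "wk k \<le> x (Suc (Suc (k + t))) i" using lower_bound(5)[OF i w1 w0] .
    ultimately show "wk k \<le> x (k + Suc t) i \<and> x (k + Suc t) i \<le> Wk k \<and>
          wk k \<le> x (Suc (k + Suc t)) i \<and> x (Suc (k + Suc t)) i \<le> Wk k"
      using Suc.IH i by auto
  qed
qed

lemma window_all: "k \<le> s \<Longrightarrow> i \<notin> M \<Longrightarrow> wk k \<le> x s i \<and> x s i \<le> Wk k"
  using window_pair[of k "s - k"] by auto

lemma Wk_mono: "Wk (Suc k) \<le> Wk k"
proof -
  have "maxN (Suc k) \<le> Wk k" unfolding maxN_le_iff using window_all[of k "Suc k"] by auto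
  moreover have "maxN (Suc (Suc k)) \<le> Wk k" unfolding maxN_le_iff using window_all[of k "Suc (Suc k)"] by auto
  ultimately show ?thesis unfolding Wk_def[of "Suc k"] by simp
qed

lemma wk_mono: "wk k \<le> wk (Suc k)"
proof -
  have "wk k \<le> minN (Suc k)" unfolding minN_ge_iff using window_all[of k "Suc k"] by auto
  moreover have "wk k \<le> minN (Suc (Suc k))" unfolding minN_ge_iff using window_all[of k "Suc (Suc k)"] by auto
  ultimately show ?thesis unfolding wk_def[of "Suc k"] by simp
qed

lemma Wk_decseq: "decseq Wk" using Wk_mono by (simp add: decseq_SucI)
lemma wk_incseq: "incseq wk" using wk_mono by (simp add: incseq_SucI)

lemma wk_le_Wk: "wk k \<le> Wk k"
proof -
  obtain i where "i \<notin> M" using NM_ne by auto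
  then show ?thesis using window_all[of k k i] by auto
qed

lemma safety_window:
  "{wk 0 .. Wk 0} \<subseteq> safety_interval M \<alpha> T (x 0) (v 0)"
proof -
  define V where "V = {(T - \<alpha> * T\<^sup>2 / 2) * v 0 i | i. i \<notin> M}"
  define X where "X = {x 0 i | i. i \<notin> M}"
  have V: "V = (\<lambda>i. cc * v 0 i) ` (- M)" unfolding V_def cc_def by auto
  have X: "X = (\<lambda>i. x 0 i) ` (- M)" unfolding X_def by auto
  have SI: "safety_interval M \<alpha> T (x 0) (v 0) = {minN 0 + min 0 (Min V) .. maxN 0 + max 0 (Max V)}"
    unfolding safety_interval_def V_def[symmetric] X_def[symmetric] unfolding X maxN_def minN_def by simp
  have finV: "finite V" "V \<noteq> {}" unfolding V using NM_ne by auto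
  have hs: "\<And>k i. 0 \<le> 1 - h * sig k i"
  proof -
    fix k i
    have "h * sig k i \<le> h" using sig_le[of k i] h_pos by (simp add: mult_left_le)
    then show "0 \<le> 1 - h * sig k i" using h_le by simp
  qed
  have up1: "maxN 1 \<le> maxN 0 + max 0 (Max V)"
    unfolding maxN_le_iff[of 1]
  proof (intro allI impI)
    fix i assume i: "i \<notin> M"
    have "SS 0 i \<le> sig 0 i * maxN 0"
      unfolding SS_def sig_def sum_distrib_right
    proof (rule sum_mono)
      fix j assume j: "j \<in> U 0 i"
      have "0 \<le> a i j" using a_nn j U_sub by blast
      moreover have "x 0 j \<le> maxN 0" using used_range[OF i j] by simp
      ultimately show "a i j * x 0 j \<le> a i j * maxN 0" by (rule mult_left_mono[rotated])
    qed
    then have a2: "h * SS 0 i \<le> h * (sig 0 i * maxN 0)" using h_pos by simp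
    have a1: "(1 - h * sig 0 i) * x 0 i \<le> (1 - h * sig 0 i) * maxN 0"
      using maxN_ge[OF i] hs[of 0 i] by (rule mult_left_mono)
    have a3: "cc * v 0 i \<le> Max V" using i unfolding V by (intro Max_ge) auto
    have "x 1 i \<le> (1 - h * sig 0 i) * maxN 0 + h * (sig 0 i * maxN 0) + Max V"
      using rec1[OF i, of 0] a1 a2 a3 by simp
    also have "\<dots> = maxN 0 + Max V" by (simp add: algebra_simps)
    finally show "x 1 i \<le> maxN 0 + max 0 (Max V)" by simp
  qed
  have lo1: "minN 0 + min 0 (Min V) \<le> minN 1"
    unfolding minN_ge_iff[of _ 1]
  proof (intro allI impI)
    fix i assume i: "i \<notin> M"
    have "sig 0 i * minN 0 \<le> SS 0 i"
      unfolding SS_def sig_def sum_distrib_right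
    proof (rule sum_mono)
      fix j assume j: "j \<in> U 0 i"
      have "0 \<le> a i j" using a_nn j U_sub by blast
      moreover have "minN 0 \<le> x 0 j" using used_range[OF i j] by simp
      ultimately show "a i j * minN 0 \<le> a i j * x 0 j" by (rule mult_left_mono[rotated])
    qed
    then have a2: "h * (sig 0 i * minN 0) \<le> h * SS 0 i" using h_pos by simp
    have a1: "(1 - h * sig 0 i) * minN 0 \<le> (1 - h * sig 0 i) * x 0 i"
      using minN_le[OF i] hs[of 0 i] by (rule mult_left_mono)
    have a3: "Min V \<le> cc * v 0 i" using i unfolding V by (intro Min_le) auto
    have "(1 - h * sig 0 i) * minN 0 + h * (sig 0 i * minN 0) + Min V \<le> x 1 i"
      using rec1[OF i, of 0] a1 a2 a3 by simp
    moreover have "(1 - h * sig 0 i) * minN 0 + h * (sig 0 i * minN 0) + Min V = minN 0 + Min V"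
      by (simp add: algebra_simps)
    ultimately show "minN 0 + min 0 (Min V) \<le> x 1 i" by simp
  qed
  have "Wk 0 \<le> maxN 0 + max 0 (Max V)" unfolding Wk_def using up1 by simp
  moreover have "minN 0 + min 0 (Min V) \<le> wk 0" unfolding wk_def using lo1 by simp
  ultimately show ?thesis unfolding SI by auto
qed

lemma safety: "i \<notin> M \<Longrightarrow> x k i \<in> {wk 0 .. Wk 0}" using window_all[of 0 k i] by auto

end


context net begin

lemma SS_bounds: "i \<notin> M \<Longrightarrow> sig k i * minN k \<le> SS k i \<and> SS k i \<le> sig k i * maxN k"
proof -
  assume i: "i \<notin> M"
  have "SS k i \<le> sig k i * maxN k"
    unfolding SS_def sig_def sum_distrib_right
  proof (rule sum_mono)
    fix j assume j: "j \<in> U k i"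
    have "0 \<le> a i j" using a_nn j U_sub by blast
    moreover have "x k j \<le> maxN k" using used_range[OF i j] by simp
    ultimately show "a i j * x k j \<le> a i j * maxN k" by (rule mult_left_mono[rotated])
  qed
  moreover have "sig k i * minN k \<le> SS k i"
    unfolding SS_def sig_def sum_distrib_right
  proof (rule sum_mono)
    fix j assume j: "j \<in> U k i"
    have "0 \<le> a i j" using a_nn j U_sub by blast
    moreover have "minN k \<le> x k j" using used_range[OF i j] by simp
    ultimately show "a i j * minN k \<le> a i j * x k j" by (rule mult_left_mono[rotated])
  qed
  ultimately show ?thesis by simp
qed

lemma agree_from_contr:
  assumes N: "N > 0" and d: "0 < \<delta>" "\<delta> \<le> 1"
    and C: "\<forall>k. Wk (k + N) - wk (k + N) \<le> (1 - \<delta>) * (Wk k - wk k)"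
  shows "\<exists>c\<in>{wk 0..Wk 0}. \<forall>i. i \<notin> M \<longrightarrow> (\<lambda>k. x k i) \<longlonglongrightarrow> c \<and> (\<lambda>k. v k i) \<longlonglongrightarrow> 0"
proof -
  define D where "D k = Wk k - wk k" for k
  have D_nn: "\<And>k. 0 \<le> D k" unfolding D_def using wk_le_Wk by simp
  have D_dec: "decseq D" unfolding D_def using Wk_decseq wk_incseq
    by (simp add: decseq_def incseq_def diff_mono)
  have D_m: "D (m * N) \<le> (1 - \<delta>) ^ m * D 0" for m
  proof (induction m)
    case 0 then show ?case by simp
  next
    case (Suc m)
    have "D (Suc m * N) = D (m * N + N)" by (simp add: add.commute)
    also have "\<dots> \<le> (1 - \<delta>) * D (m * N)" using C unfolding D_def by blast
    also have "\<dots> \<le> (1 - \<delta>) * ((1 - \<delta>) ^ m * D 0)" using Suc.IH d by (intro mult_left_mono) auto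
    finally show ?case by simp
  qed
  have geo: "(\<lambda>m. (1 - \<delta>) ^ m * D 0) \<longlonglongrightarrow> 0"
    using LIMSEQ_realpow_zero[of "1 - \<delta>"] d by (intro tendsto_mult_left_zero) auto
  have D0: "D \<longlonglongrightarrow> 0"
  proof (rule LIMSEQ_I)
    fix r :: real assume r: "0 < r"
    obtain m0 where m0: "\<forall>m\<ge>m0. norm ((1 - \<delta>) ^ m * D 0 - 0) < r" using LIMSEQ_D[OF geo r] by blast
    have "\<forall>n\<ge>m0 * N. norm (D n - 0) < r"
    proof (intro allI impI)
      fix n assume n: "m0 * N \<le> n"
      have "D n \<le> D (m0 * N)" using D_dec n by (simp add: decseq_def)
      also have "\<dots> \<le> (1 - \<delta>) ^ m0 * D 0" by (rule D_m)
      also have "\<dots> < r" using m0 by auto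
      finally show "norm (D n - 0) < r" using D_nn[of n] by simp
    qed
    then show "\<exists>no. \<forall>n\<ge>no. norm (D n - 0) < r" by blast
  qed
  have Wlow: "\<forall>i. wk 0 \<le> Wk i"
  proof
    fix i show "wk 0 \<le> Wk i" using wk_incseq wk_le_Wk[of i] by (meson incseq_def le0 order_trans)
  qed
  obtain L where L: "Wk \<longlonglongrightarrow> L" "\<forall>i. L \<le> Wk i" using decseq_convergent[OF Wk_decseq Wlow] by blast
  have wL: "wk \<longlonglongrightarrow> L"
  proof -
    have "(\<lambda>k. Wk k - D k) \<longlonglongrightarrow> L - 0" using L(1) D0 by (intro tendsto_diff)
    moreover have "(\<lambda>k. Wk k - D k) = wk" unfolding D_def by auto
    ultimately show ?thesis by simp
  qed
  have Lin: "L \<in> {wk 0..Wk 0}" using L(2) incseq_le[OF wk_incseq wL, of 0] by auto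
  have conv: "(\<lambda>k. x k i) \<longlonglongrightarrow> L \<and> (\<lambda>k. v k i) \<longlonglongrightarrow> 0" if i: "i \<notin> M" for i
  proof -
    have xL: "(\<lambda>k. x k i) \<longlonglongrightarrow> L"
      by (rule tendsto_sandwich[OF _ _ wL L(1)]) (use window_all[OF _ i] in auto)
    define s where "s k = sig k i * x k i - SS k i" for k
    have sb: "- D k \<le> s k \<and> s k \<le> D k" for k
    proof -
      have w1: "wk k \<le> minN k" "maxN k \<le> Wk k" unfolding wk_def Wk_def by auto
      have xb: "wk k \<le> x k i" "x k i \<le> Wk k" using window_all[OF _ i, of k k] by auto
      have sg: "0 \<le> sig k i" "sig k i \<le> 1" using sig_nn sig_le by auto
      have SSb: "sig k i * wk k \<le> SS k i" "SS k i \<le> sig k i * Wk k"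
        using SS_bounds[OF i, of k] w1 sg
        by (meson mult_left_mono order_trans)+
      have "sig k i * x k i \<le> sig k i * Wk k" using xb sg by (simp add: mult_left_mono)
      moreover have "sig k i * wk k \<le> sig k i * x k i" using xb sg by (simp add: mult_left_mono)
      moreover have "sig k i * D k \<le> D k" using sg D_nn[of k] by (simp add: mult_left_le_one_le)
      moreover have "sig k i * D k = sig k i * Wk k - sig k i * wk k" unfolding D_def by (simp add: algebra_simps)
      ultimately show ?thesis using SSb unfolding s_def by linarith
    qed
    have s0: "s \<longlonglongrightarrow> 0"
    proof (rule tendsto_sandwich[of "\<lambda>k. - D k" _ _ D])
      show "\<forall>\<^sub>F n in sequentially. - D n \<le> s n" using sb by simp
      show "\<forall>\<^sub>F n in sequentially. s n \<le> D n" using sb by simp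
      show "(\<lambda>k. - D k) \<longlonglongrightarrow> 0" using tendsto_minus[OF D0] by simp
      show "D \<longlonglongrightarrow> 0" by (rule D0)
    qed
    have veq: "v k i = (x (Suc k) i - x k i + h * s k) / cc" for k
      using rec1[OF i, of k] cc_pos unfolding s_def by (simp add: field_simps)
    have "(\<lambda>k. (x (Suc k) i - x k i + h * s k) / cc) \<longlonglongrightarrow> (L - L + h * 0) / cc"
      using xL LIMSEQ_Suc[OF xL] s0 cc_pos by (intro tendsto_intros) auto
    then have "(\<lambda>k. v k i) \<longlonglongrightarrow> 0" unfolding veq by simp
    then show ?thesis using xL by simp
  qed
  show ?thesis using Lin conv by blast
qed

end


context net begin

definition "eta = h * min \<gamma> 1"
lemma eta_pos: "eta > 0" unfolding eta_def using h_pos gamma_pos by simp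
lemma eta_le_h: "eta \<le> h" unfolding eta_def using h_pos by (simp add: mult_left_le)
lemma eta_le1: "eta \<le> 1" using eta_le_h h_le by simp

lemma sig_f1:
  assumes f1: "f \<ge> 1" and i: "i \<notin> M"
  shows "sig k i \<le> 1 - min \<gamma> 1"
proof (cases "in_nbrs E i = {}")
  case True
  then have "U k i = {}" using U_sub by blast
  then show ?thesis unfolding sig_def by simp
next
  case False
  obtain A B where L: "ignored_large (in_nbrs E i) (\<lambda>j. x k j - x k i) f A"
    and S: "ignored_small (in_nbrs E i) (\<lambda>j. x k j - x k i) f B" and R: "RR k i = A \<union> B"
    using RR[OF i, of k] unfolding dpmsr_ignored_def by blast
  have "A \<union> B \<noteq> {}" using R_nonempty[OF _ f1 False L S] by simp
  then obtain r where r: "r \<in> A \<union> B" by blast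
  have rN: "r \<in> in_nbrs E i" using r large_sub[OF L] small_sub[OF S] by blast
  have "sig k i \<le> (\<Sum>j\<in>in_nbrs E i - {r}. a i j)"
    unfolding sig_def U_def R using r a_nn by (intro sum_mono2) auto
  also have "\<dots> = (\<Sum>j\<in>in_nbrs E i. a i j) - a i r" using rN by (simp add: sum_diff1)
  also have "\<dots> \<le> 1 - \<gamma>" using weight_sum a_ge[OF rN] by (smt (verit))
  finally show ?thesis by simp
qed

lemma p1_f1: "f \<ge> 1 \<Longrightarrow> i \<notin> M \<Longrightarrow> eta \<le> p1 k i"
proof -
  assume f1: "f \<ge> 1" and i: "i \<notin> M"
  have "h * min \<gamma> 1 \<le> h * (1 - sig k i)" using sig_f1[OF f1 i, of k] h_pos by simp
  then show ?thesis using p1_nn[of k i] unfolding eta_def by simp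
qed

lemma persist_up:
  assumes f1: "f \<ge> 1" and s: "Suc k0 \<le> s" and i: "i \<notin> M"
    and xs: "x s i \<le> Wk k0 - \<epsilon>" and e: "0 \<le> \<epsilon>"
  shows "x (Suc s) i \<le> Wk k0 - eta * \<epsilon>"
proof -
  obtain s' where s': "s = Suc s'" "k0 \<le> s'" using s by (cases s) auto
  have W1: "\<forall>j. j \<notin> M \<longrightarrow> x (Suc s') j \<le> Wk k0" using window_all s' by auto
  have W0: "\<forall>j. j \<notin> M \<longrightarrow> x s' j \<le> Wk k0" using window_all s' by auto
  have b: "x (Suc (Suc s')) i \<le> Wk k0 - p1 (Suc s') i * (Wk k0 - x (Suc s') i)"
    by (rule upper_bound(1)[OF i W1 W0])
  have "eta * \<epsilon> \<le> p1 (Suc s') i * (Wk k0 - x (Suc s') i)"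
    using p1_f1[OF f1 i] p1_ge0 xs e eta_pos s' by (intro mult_mono) auto
  then show ?thesis using b s' by simp
qed

lemma persist_lo:
  assumes f1: "f \<ge> 1" and s: "Suc k0 \<le> s" and i: "i \<notin> M"
    and xs: "wk k0 + \<epsilon> \<le> x s i" and e: "0 \<le> \<epsilon>"
  shows "wk k0 + eta * \<epsilon> \<le> x (Suc s) i"
proof -
  obtain s' where s': "s = Suc s'" "k0 \<le> s'" using s by (cases s) auto
  have W1: "\<forall>j. j \<notin> M \<longrightarrow> wk k0 \<le> x (Suc s') j" using window_all s' by auto
  have W0: "\<forall>j. j \<notin> M \<longrightarrow> wk k0 \<le> x s' j" using window_all s' by auto
  have b: "x (Suc (Suc s')) i \<ge> wk k0 + p1 (Suc s') i * (x (Suc s') i - wk k0)"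
    by (rule lower_bound(1)[OF i W1 W0])
  have "eta * \<epsilon> \<le> p1 (Suc s') i * (x (Suc s') i - wk k0)"
    using p1_f1[OF f1 i] p1_ge0 xs e eta_pos s' by (intro mult_mono) auto
  then show ?thesis using b s' by simp
qed

lemma pull_up_step:
  assumes s: "Suc k0 \<le> s" and i: "i \<notin> M" and j: "j \<in> U s i"
    and xs: "x s j \<le> Wk k0 - \<epsilon>" and e: "0 \<le> \<epsilon>"
  shows "x (Suc s) i \<le> Wk k0 - eta * \<epsilon>"
proof -
  obtain s' where s': "s = Suc s'" "k0 \<le> s'" using s by (cases s) auto
  have W1: "\<forall>j. j \<notin> M \<longrightarrow> x (Suc s') j \<le> Wk k0" using window_all s' by auto
  have W0: "\<forall>j. j \<notin> M \<longrightarrow> x s' j \<le> Wk k0" using window_all s' by auto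
  have j': "j \<in> U (Suc s') i" using j s' by simp
  have b: "x (Suc (Suc s')) i \<le> Wk k0 - h * a i j * (Wk k0 - x (Suc s') j)"
    by (rule upper_bound(3)[OF i W1 W0 j'])
  have aj: "\<gamma> \<le> a i j" using a_ge j U_sub by blast
  have "eta \<le> h * a i j" unfolding eta_def using h_pos aj by (intro mult_left_mono) auto
  then have "eta * \<epsilon> \<le> h * a i j * (Wk k0 - x (Suc s') j)"
    using xs e eta_pos s' by (intro mult_mono) auto
  then show ?thesis using b s' by simp
qed

lemma pull_lo_step:
  assumes s: "Suc k0 \<le> s" and i: "i \<notin> M" and j: "j \<in> U s i"
    and xs: "wk k0 + \<epsilon> \<le> x s j" and e: "0 \<le> \<epsilon>"
  shows "wk k0 + eta * \<epsilon> \<le> x (Suc s) i"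
proof -
  obtain s' where s': "s = Suc s'" "k0 \<le> s'" using s by (cases s) auto
  have W1: "\<forall>j. j \<notin> M \<longrightarrow> wk k0 \<le> x (Suc s') j" using window_all s' by auto
  have W0: "\<forall>j. j \<notin> M \<longrightarrow> wk k0 \<le> x s' j" using window_all s' by auto
  have j': "j \<in> U (Suc s') i" using j s' by simp
  have b: "x (Suc (Suc s')) i \<ge> wk k0 + h * a i j * (x (Suc s') j - wk k0)"
    by (rule lower_bound(3)[OF i W1 W0 j'])
  have aj: "\<gamma> \<le> a i j" using a_ge j U_sub by blast
  have "eta \<le> h * a i j" unfolding eta_def using h_pos aj by (intro mult_left_mono) auto
  then have "eta * \<epsilon> \<le> h * a i j * (x (Suc s') j - wk k0)"
    using xs e eta_pos s' by (intro mult_mono) auto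
  then show ?thesis using b s' by simp
qed

lemma exists_used_low:
  assumes i: "i \<notin> M" and Low: "Low \<subseteq> in_nbrs E i" "f + 1 \<le> card Low" "\<forall>j\<in>Low. x s j < x s i"
  shows "\<exists>j\<in>Low. j \<in> U s i"
proof -
  obtain A B where L: "ignored_large (in_nbrs E i) (\<lambda>j. x s j - x s i) f A"
    and S: "ignored_small (in_nbrs E i) (\<lambda>j. x s j - x s i) f B" and R: "RR s i = A \<union> B"
    using RR[OF i, of s] unfolding dpmsr_ignored_def by blast
  have "\<exists>j\<in>Low. j \<notin> A \<union> B" using pull_low[OF _ L S Low(1,2)] Low(3) by simp
  then show ?thesis unfolding U_def R using Low(1) by blast
qed

lemma exists_used_high:
  assumes i: "i \<notin> M" and High: "High \<subseteq> in_nbrs E i" "f + 1 \<le> card High" "\<forall>j\<in>High. x s i < x s j"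
  shows "\<exists>j\<in>High. j \<in> U s i"
proof -
  obtain A B where L: "ignored_large (in_nbrs E i) (\<lambda>j. x s j - x s i) f A"
    and S: "ignored_small (in_nbrs E i) (\<lambda>j. x s j - x s i) f B" and R: "RR s i = A \<union> B"
    using RR[OF i, of s] unfolding dpmsr_ignored_def by blast
  have "\<exists>j\<in>High. j \<notin> A \<union> B" using pull_high[OF _ L S High(1,2)] High(3) by simp
  then show ?thesis unfolding U_def R using High(1) by blast
qed

lemma contr_f1:
  assumes f1: "f \<ge> 1" and rob: "rs_robust E (f + 1) (f + 1)"
  shows "Wk (k0 + Suc (2 * CARD('v))) - wk (k0 + Suc (2 * CARD('v)))
           \<le> (1 - eta ^ Suc (2 * CARD('v)) / 2) * (Wk k0 - wk k0)"
proof -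
  define n where "n = CARD('v)"
  define L where "L = 2 * n"
  define W where "W = Wk k0"
  define w where "w = wk k0"
  define D where "D = W - w"
  have endW: "Wk (k0 + Suc L) \<le> W" unfolding W_def using Wk_decseq by (simp add: decseq_def)
  have endw: "w \<le> wk (k0 + Suc L)" unfolding w_def using wk_incseq by (simp add: incseq_def)
  have D_nn: "0 \<le> D" unfolding D_def W_def w_def using wk_le_Wk by simp
  show ?thesis
  proof (cases "D = 0")
    case True
    have "Wk (k0 + Suc L) - wk (k0 + Suc L) \<le> 0" using endW endw True unfolding D_def by simp
    then show ?thesis using True unfolding D_def W_def w_def L_def n_def by simp
  next
    case False
    then have Dpos: "0 < D" using D_nn by simp
    define \<epsilon> where "\<epsilon> l = eta ^ l * (D / 2)" for l
    have e_nn: "0 \<le> \<epsilon> l" for l unfolding \<epsilon>_def using eta_pos Dpos by simp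
    have e_le: "\<epsilon> l \<le> D / 2" for l
    proof -
      have "eta ^ l \<le> 1" using eta_pos eta_le1 by (simp add: power_le_one)
      then show ?thesis unfolding \<epsilon>_def using Dpos by (simp add: mult_left_le_one_le)
    qed
    have e_Suc: "\<epsilon> (Suc l) = eta * \<epsilon> l" for l unfolding \<epsilon>_def by simp
    have e_dec: "\<epsilon> (Suc l) \<le> \<epsilon> l" for l
    proof -
      have "eta * \<epsilon> l \<le> 1 * \<epsilon> l" using e_nn[of l] eta_le1 by (intro mult_right_mono) auto
      then show ?thesis unfolding e_Suc by simp
    qed
    define HN where "HN l = {i. i \<notin> M \<and> W - \<epsilon> l < x (Suc k0 + l) i}" for l
    define LN where "LN l = {i. i \<notin> M \<and> x (Suc k0 + l) i < w + \<epsilon> l}" for l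
    have HN_sub: "HN (Suc l) \<subseteq> HN l" for l
    proof
      fix i assume i: "i \<in> HN (Suc l)"
      show "i \<in> HN l"
      proof (rule ccontr)
        assume "i \<notin> HN l"
        then have "x (Suc k0 + l) i \<le> W - \<epsilon> l" using i unfolding HN_def by auto
        then have "x (Suc (Suc k0 + l)) i \<le> W - eta * \<epsilon> l"
          unfolding W_def using persist_up[OF f1 _ _ _ e_nn] i unfolding HN_def by auto
        then show False using i unfolding HN_def e_Suc by auto
      qed
    qed
    have LN_sub: "LN (Suc l) \<subseteq> LN l" for l
    proof
      fix i assume i: "i \<in> LN (Suc l)"
      show "i \<in> LN l"
      proof (rule ccontr)
        assume "i \<notin> LN l"
        then have "w + \<epsilon> l \<le> x (Suc k0 + l) i" using i unfolding LN_def by auto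
        then have "w + eta * \<epsilon> l \<le> x (Suc (Suc k0 + l)) i"
          unfolding w_def using persist_lo[OF f1 _ _ _ e_nn] i unfolding LN_def by auto
        then show False using i unfolding LN_def e_Suc by auto
      qed
    qed
    have strict: "HN (Suc l) \<subset> HN l \<or> LN (Suc l) \<subset> LN l" if ne: "HN l \<noteq> {}" "LN l \<noteq> {}" for l
    proof -
      define s where "s = Suc k0 + l"
      define S1 where "S1 = {j. W - \<epsilon> l < x s j}"
      define S2 where "S2 = {j. x s j < w + \<epsilon> l}"
      have HS: "HN l \<subseteq> S1" unfolding HN_def S1_def s_def by auto
      have LS: "LN l \<subseteq> S2" unfolding LN_def S2_def s_def by auto
      have disj: "S1 \<inter> S2 = {}"
      proof -
        have "w + \<epsilon> l \<le> W - \<epsilon> l" using e_le[of l] unfolding D_def by simp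
        then show ?thesis unfolding S1_def S2_def by auto
      qed
      have S1ne: "S1 \<noteq> {}" and S2ne: "S2 \<noteq> {}" using ne HS LS by auto
      have rc: "reach_set E (f + 1) S1 = S1 \<or> reach_set E (f + 1) S2 = S2 \<or>
          f + 1 \<le> card (reach_set E (f + 1) S1) + card (reach_set E (f + 1) S2)"
        using rob S1ne S2ne disj unfolding rs_robust_def by blast
      have "\<exists>i. i \<notin> M \<and> (i \<in> reach_set E (f + 1) S1 \<or> i \<in> reach_set E (f + 1) S2)"
      proof -
        { assume "reach_set E (f + 1) S1 = S1"
          moreover obtain i0 where "i0 \<in> HN l" using ne(1) by blast
          ultimately have ?thesis using HS unfolding HN_def by blast }
        moreover
        { assume "reach_set E (f + 1) S2 = S2"
          moreover obtain i0 where "i0 \<in> LN l" using ne(2) by blast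
          ultimately have ?thesis using LS unfolding LN_def by blast }
        moreover
        { assume c: "f + 1 \<le> card (reach_set E (f + 1) S1) + card (reach_set E (f + 1) S2)"
          have d: "reach_set E (f + 1) S1 \<inter> reach_set E (f + 1) S2 = {}"
            using disj unfolding reach_set_def by auto
          then have "card (reach_set E (f + 1) S1 \<union> reach_set E (f + 1) S2) \<ge> f + 1"
            using c by (simp add: card_Un_disjoint)
          have "\<not> (reach_set E (f + 1) S1 \<union> reach_set E (f + 1) S2 \<subseteq> M)"
          proof
            assume sub: "reach_set E (f + 1) S1 \<union> reach_set E (f + 1) S2 \<subseteq> M"
            have "card (reach_set E (f + 1) S1 \<union> reach_set E (f + 1) S2) \<le> card M"
              using sub by (intro card_mono) auto
            then show False using Mcard \<open>card (reach_set E (f + 1) S1 \<union> reach_set E (f + 1) S2) \<ge> f + 1\<close> by simp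
          qed
          then obtain i0 where "i0 \<in> reach_set E (f + 1) S1 \<union> reach_set E (f + 1) S2" "i0 \<notin> M" by blast
          then have ?thesis by blast }
        ultimately show ?thesis using rc by blast
      qed
      then obtain i where i: "i \<notin> M" and ir: "i \<in> reach_set E (f + 1) S1 \<or> i \<in> reach_set E (f + 1) S2"
        by blast
      show ?thesis
      proof (cases "i \<in> reach_set E (f + 1) S1")
        case True
        define Low where "Low = {j. (j, i) \<in> E \<and> j \<notin> S1}"
        have iS1: "i \<in> S1" and cL: "f + 1 \<le> card Low" using True unfolding reach_set_def Low_def by auto
        have LowN: "Low \<subseteq> in_nbrs E i" unfolding Low_def in_nbrs_def by auto
        have Lowv: "\<forall>j\<in>Low. x s j < x s i" using iS1 unfolding Low_def S1_def by auto
        obtain j where j: "j \<in> Low" "j \<in> U s i" using exists_used_low[OF i LowN cL Lowv] by blast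
        have xj: "x s j \<le> W - \<epsilon> l" using j(1) unfolding Low_def S1_def by auto
        have "x (Suc s) i \<le> W - eta * \<epsilon> l"
          unfolding W_def by (rule pull_up_step[OF _ i j(2) _ e_nn]) (use xj s_def W_def in auto)
        then have "i \<notin> HN (Suc l)" unfolding HN_def e_Suc s_def by auto
        moreover have "i \<in> HN l" using i iS1 unfolding HN_def S1_def s_def by auto
        ultimately show ?thesis using HN_sub[of l] by blast
      next
        case False
        then have ir2: "i \<in> reach_set E (f + 1) S2" using ir by blast
        define High where "High = {j. (j, i) \<in> E \<and> j \<notin> S2}"
        have iS2: "i \<in> S2" and cH: "f + 1 \<le> card High" using ir2 unfolding reach_set_def High_def by auto
        have HighN: "High \<subseteq> in_nbrs E i" unfolding High_def in_nbrs_def by auto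
        have Highv: "\<forall>j\<in>High. x s i < x s j" using iS2 unfolding High_def S2_def by auto
        obtain j where j: "j \<in> High" "j \<in> U s i" using exists_used_high[OF i HighN cH Highv] by blast
        have xj: "w + \<epsilon> l \<le> x s j" using j(1) unfolding High_def S2_def by auto
        have "w + eta * \<epsilon> l \<le> x (Suc s) i"
          unfolding w_def by (rule pull_lo_step[OF _ i j(2) _ e_nn]) (use xj s_def w_def in auto)
        then have "i \<notin> LN (Suc l)" unfolding LN_def e_Suc s_def by auto
        moreover have "i \<in> LN l" using i iS2 unfolding LN_def S2_def s_def by auto
        ultimately show ?thesis using LN_sub[of l] by blast
      qed
    qed
    define \<phi> where "\<phi> l = card (HN l) + card (LN l)" for l
    have count: "HN l = {} \<or> LN l = {} \<or> \<phi> l + l \<le> \<phi> 0" for l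
    proof (induction l)
      case 0 then show ?case by simp
    next
      case (Suc l)
      show ?case
      proof (cases "HN l = {} \<or> LN l = {}")
        case True
        then have "HN (Suc l) = {} \<or> LN (Suc l) = {}" using HN_sub[of l] LN_sub[of l] by auto
        then show ?thesis by (rule disjE) (rule disjI1, assumption, rule disjI2, rule disjI1, assumption)
      next
        case False
        then have ne: "HN l \<noteq> {}" "LN l \<noteq> {}" by auto
        have ih: "\<phi> l + l \<le> \<phi> 0" using Suc.IH ne by blast
        have c1: "card (HN (Suc l)) \<le> card (HN l)" using HN_sub[of l] by (intro card_mono) auto
        have c2: "card (LN (Suc l)) \<le> card (LN l)" using LN_sub[of l] by (intro card_mono) auto
        have "card (HN (Suc l)) < card (HN l) \<or> card (LN (Suc l)) < card (LN l)"
        proof (cases "HN (Suc l) \<subset> HN l")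
          case True then show ?thesis using psubset_card_mono[of "HN l"] by simp
        next
          case False then have "LN (Suc l) \<subset> LN l" using strict[OF ne] by blast
          then show ?thesis using psubset_card_mono[of "LN l"] by simp
        qed
        then have "\<phi> (Suc l) < \<phi> l" unfolding \<phi>_def using c1 c2 by linarith
        then show ?thesis using ih by simp
      qed
    qed
    have phi0: "\<phi> 0 \<le> L"
    proof -
      have "card (HN 0) \<le> n" "card (LN 0) \<le> n" unfolding n_def by (auto intro: card_mono)
      then show ?thesis unfolding \<phi>_def L_def by simp
    qed
    have emp: "HN L = {} \<or> LN L = {}"
    proof (rule ccontr)
      assume a: "\<not> ?thesis"
      then have "\<phi> L + L \<le> \<phi> 0" using count[of L] by blast
      then have "\<phi> L = 0" using phi0 by simp
      then have "HN L = {}" unfolding \<phi>_def by simp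
      then show False using a by blast
    qed
    have kN: "k0 + Suc L = Suc k0 + L" by simp
    have key: "Wk (k0 + Suc L) - wk (k0 + Suc L) \<le> D - \<epsilon> (Suc L)"
    proof (cases "HN L = {}")
      case True
      have a1: "\<forall>i. i \<notin> M \<longrightarrow> x (Suc k0 + L) i \<le> W - \<epsilon> L" using True unfolding HN_def by auto
      have a2: "\<forall>i. i \<notin> M \<longrightarrow> x (Suc (Suc k0 + L)) i \<le> W - \<epsilon> (Suc L)"
        using a1 persist_up[OF f1 _ _ _ e_nn] unfolding W_def e_Suc by auto
      have "maxN (Suc k0 + L) \<le> W - \<epsilon> (Suc L)" unfolding maxN_le_iff
      proof (intro allI impI)
        fix i assume "i \<notin> M" then show "x (Suc k0 + L) i \<le> W - \<epsilon> (Suc L)" using a1 e_dec[of L] by smt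
      qed
      moreover have "maxN (Suc (Suc k0 + L)) \<le> W - \<epsilon> (Suc L)" unfolding maxN_le_iff using a2 by blast
      ultimately have "Wk (k0 + Suc L) \<le> W - \<epsilon> (Suc L)" unfolding Wk_def kN by simp
      then show ?thesis using endw unfolding D_def by simp
    next
      case False
      then have True': "LN L = {}" using emp by blast
      have a1: "\<forall>i. i \<notin> M \<longrightarrow> w + \<epsilon> L \<le> x (Suc k0 + L) i" using True' unfolding LN_def by auto
      have a2: "\<forall>i. i \<notin> M \<longrightarrow> w + \<epsilon> (Suc L) \<le> x (Suc (Suc k0 + L)) i"
        using a1 persist_lo[OF f1 _ _ _ e_nn] unfolding w_def e_Suc by auto
      have "w + \<epsilon> (Suc L) \<le> minN (Suc k0 + L)" unfolding minN_ge_iff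
      proof (intro allI impI)
        fix i assume "i \<notin> M" then show "w + \<epsilon> (Suc L) \<le> x (Suc k0 + L) i" using a1 e_dec[of L] by smt
      qed
      moreover have "w + \<epsilon> (Suc L) \<le> minN (Suc (Suc k0 + L))" unfolding minN_ge_iff using a2 by blast
      ultimately have "w + \<epsilon> (Suc L) \<le> wk (k0 + Suc L)" unfolding wk_def kN by simp
      then show ?thesis using endW unfolding D_def by simp
    qed
    have "D - \<epsilon> (Suc L) = (1 - eta ^ Suc L / 2) * D" unfolding \<epsilon>_def by (simp add: algebra_simps)
    then show ?thesis using key unfolding D_def W_def w_def L_def n_def by simp
  qed
qed

end


definition inclosed :: "('v \<times> 'v) set \<Rightarrow> 'v set \<Rightarrow> bool" where
  "inclosed E S \<longleftrightarrow> (\<forall>i\<in>S. \<forall>j. (j, i) \<in> E \<longrightarrow> j \<in> S)"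

lemma reach_empty: "inclosed E S \<Longrightarrow> reach_set E 1 S = {}"
proof -
  assume a: "inclosed E S"
  have e: "card {j. (j, i) \<in> E \<and> j \<notin> S} = 0" if "i \<in> S" for i
  proof -
    have "\<forall>j. (j, i) \<in> E \<longrightarrow> j \<in> S" using a that unfolding inclosed_def by blast
    then have "{j. (j, i) \<in> E \<and> j \<notin> S} = {}" by blast
    then show ?thesis by (metis card.empty)
  qed
  show ?thesis unfolding reach_set_def using e by fastforce
qed

lemma robust_inclosed:
  assumes "rs_robust E 1 1" "inclosed E S1" "inclosed E S2" "S1 \<noteq> {}" "S2 \<noteq> {}"
  shows "S1 \<inter> S2 \<noteq> {}"
proof
  assume d: "S1 \<inter> S2 = {}"
  have "reach_set E 1 S1 = S1 \<or> reach_set E 1 S2 = S2 \<or> 1 \<le> card (reach_set E 1 S1) + card (reach_set E 1 S2)"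
    using assms(1,4,5) d unfolding rs_robust_def by blast
  then show False using reach_empty[OF assms(2)] reach_empty[OF assms(3)] assms(4,5) by auto
qed

lemma root_exists:
  fixes E :: "('v::finite \<times> 'v) set"
  assumes rob: "rs_robust E 1 1"
  shows "\<exists>r. \<forall>i. (r, i) \<in> E\<^sup>*"
proof -
  define P where "P S \<longleftrightarrow> inclosed E S \<and> S \<noteq> {}" for S :: "'v set"
  have "P UNIV" unfolding P_def inclosed_def by auto
  then obtain C where C: "P C" "\<forall>S. P S \<longrightarrow> card C \<le> card S"
    using ex_has_least_nat[of P UNIV card] by blast
  have sub: "C \<subseteq> {j. (j, u) \<in> E\<^sup>*}" for u
  proof -
    define A where "A = {j. (j, u) \<in> E\<^sup>*}"
    have Aic: "inclosed E A" unfolding inclosed_def A_def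
      by (auto intro: converse_rtrancl_into_rtrancl)
    have "u \<in> A" unfolding A_def by simp
    then have "A \<noteq> {}" by auto
    then have ne: "A \<inter> C \<noteq> {}" using robust_inclosed[OF rob Aic] C(1) unfolding P_def by blast
    have "inclosed E (A \<inter> C)" using Aic C(1) unfolding P_def inclosed_def by blast
    then have "P (A \<inter> C)" using ne unfolding P_def by simp
    then have "card C \<le> card (A \<inter> C)" using C(2) by blast
    moreover have "card (A \<inter> C) \<le> card C" by (rule card_mono) auto
    ultimately have "A \<inter> C = C" by (intro card_subset_eq) auto
    then show ?thesis unfolding A_def by blast
  qed
  obtain r where "r \<in> C" using C(1) unfolding P_def by blast
  then show ?thesis using sub by blast
qed

lemma walkF:
  fixes e :: "nat \<Rightarrow> 'v \<Rightarrow> real"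
  assumes z: "0 < \<zeta>" "\<zeta> \<le> 1" and B: "0 \<le> B"
    and edge0: "\<forall>s i j. 2 \<le> s \<longrightarrow> (j, i) \<in> E \<longrightarrow> \<zeta> * e (s - 1) j \<le> e s i \<and> \<zeta> * e (s - 2) j \<le> e s i"
  shows "(y0, y) \<in> E ^^ m \<Longrightarrow> 1 \<le> t0 \<Longrightarrow> \<zeta> ^ t0 * B \<le> e t0 y0 \<Longrightarrow> t0 + m \<le> t \<Longrightarrow> t \<le> t0 + 2 * m
    \<Longrightarrow> \<zeta> ^ t * B \<le> e t y"
proof (induction m arbitrary: y t)
  case 0 then show ?case by simp
next
  case (Suc m)
  obtain z where z1: "(y0, z) \<in> E ^^ m" and z2: "(z, y) \<in> E" using Suc.prems(1) by (rule relpow_Suc_E)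
  define t' where "t' = (if t - 1 \<le> t0 + 2 * m then t - 1 else t - 2)"
  have t'1: "t0 + m \<le> t'" "t' \<le> t0 + 2 * m" using Suc.prems unfolding t'_def by auto
  have ih: "\<zeta> ^ t' * B \<le> e t' z" using Suc.IH[OF z1 Suc.prems(2,3) t'1] .
  have t2: "2 \<le> t" using Suc.prems by simp
  have ed: "\<zeta> * e t' z \<le> e t y" using edge0[rule_format, OF t2 z2] unfolding t'_def by (auto split: if_splits)
  have "\<zeta> ^ t * B \<le> \<zeta> ^ Suc t' * B"
    using t'1 Suc.prems z B unfolding t'_def by (intro mult_right_mono power_decreasing) (auto split: if_splits)
  also have "\<dots> = \<zeta> * (\<zeta> ^ t' * B)" by simp
  also have "\<dots> \<le> \<zeta> * e t' z" using ih z by (intro mult_left_mono) auto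
  also have "\<dots> \<le> e t y" by (rule ed)
  finally show ?case .
qed

lemma all_lift:
  fixes E :: "('v::finite \<times> 'v) set"
  assumes root: "\<forall>i. (r, i) \<in> E\<^sup>*"
  shows "\<exists>N\<ge>1. \<forall>(e :: nat \<Rightarrow> 'v \<Rightarrow> real) \<zeta>. 0 < \<zeta> \<longrightarrow> \<zeta> \<le> 1 \<longrightarrow> 0 \<le> e 1 r \<longrightarrow>
     (\<forall>s i j. 2 \<le> s \<longrightarrow> (j, i) \<in> E \<longrightarrow> \<zeta> * e (s - 1) j \<le> e s i \<and> \<zeta> * e (s - 2) j \<le> e s i) \<longrightarrow>
     (in_nbrs E r = {} \<longrightarrow> (\<forall>s. 2 \<le> s \<longrightarrow> \<zeta> * e (s - 1) r \<le> e s r)) \<longrightarrow>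
     (\<forall>i t. N \<le> t \<longrightarrow> \<zeta> ^ t * e 1 r \<le> e t i)"
proof -
  define Q where "Q T0 \<longleftrightarrow> (\<forall>(e :: nat \<Rightarrow> 'v \<Rightarrow> real) \<zeta>. 0 < \<zeta> \<longrightarrow> \<zeta> \<le> 1 \<longrightarrow> 0 \<le> e 1 r \<longrightarrow>
     (\<forall>s i j. 2 \<le> s \<longrightarrow> (j, i) \<in> E \<longrightarrow> \<zeta> * e (s - 1) j \<le> e s i \<and> \<zeta> * e (s - 2) j \<le> e s i) \<longrightarrow>
     (in_nbrs E r = {} \<longrightarrow> (\<forall>s. 2 \<le> s \<longrightarrow> \<zeta> * e (s - 1) r \<le> e s r)) \<longrightarrow>
     (\<forall>t. T0 \<le> t \<longrightarrow> \<zeta> ^ t * e 1 r \<le> e t r))" for T0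
  have "\<exists>T0\<ge>1. Q T0"
  proof (cases "in_nbrs E r = {}")
    case True
    have "Q 1" unfolding Q_def
    proof (intro allI impI)
      fix e :: "nat \<Rightarrow> 'v \<Rightarrow> real" and \<zeta> :: real and t :: nat
      assume z: "0 < \<zeta>" "\<zeta> \<le> 1" and B: "0 \<le> e 1 r"
        and ed: "\<forall>s i j. 2 \<le> s \<longrightarrow> (j, i) \<in> E \<longrightarrow> \<zeta> * e (s - 1) j \<le> e s i \<and> \<zeta> * e (s - 2) j \<le> e s i"
        and own: "in_nbrs E r = {} \<longrightarrow> (\<forall>s. 2 \<le> s \<longrightarrow> \<zeta> * e (s - 1) r \<le> e s r)" and t: "1 \<le> t"
      have own': "\<And>s. 2 \<le> s \<Longrightarrow> \<zeta> * e (s - 1) r \<le> e s r" using own True by blast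
      show "\<zeta> ^ t * e 1 r \<le> e t r" using t
      proof (induction t rule: dec_induct)
        case base then show ?case using z B by (simp add: mult_left_le_one_le)
      next
        case (step t)
        have "\<zeta> ^ Suc t * e 1 r = \<zeta> * (\<zeta> ^ t * e 1 r)" by simp
        also have "\<dots> \<le> \<zeta> * e t r" using step.IH z by (intro mult_left_mono) auto
        also have "\<dots> \<le> e (Suc t) r" using own'[of "Suc t"] step.hyps by simp
        finally show ?case .
      qed
    qed
    then show ?thesis by (intro exI[of _ 1]) simp
  next
    case False
    then obtain j where "j \<in> in_nbrs E r" by auto
    then have jr: "(j, r) \<in> E" unfolding in_nbrs_def by simp
    have "(r, j) \<in> E\<^sup>*" using root by (rule spec)
    then obtain m where "(r, j) \<in> E ^^ m" using rtrancl_imp_relpow by blast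
    then have cyc: "(r, r) \<in> E ^^ Suc m" using jr by (rule relpow_Suc_I)
    define c where "c = Suc m"
    have "Q (Suc c)" unfolding Q_def
    proof (intro allI impI)
      fix e :: "nat \<Rightarrow> 'v \<Rightarrow> real" and \<zeta> :: real and t :: nat
      assume z: "0 < \<zeta>" "\<zeta> \<le> 1" and B: "0 \<le> e 1 r"
        and ed: "\<forall>s i j. 2 \<le> s \<longrightarrow> (j, i) \<in> E \<longrightarrow> \<zeta> * e (s - 1) j \<le> e s i \<and> \<zeta> * e (s - 2) j \<le> e s i"
        and own: "in_nbrs E r = {} \<longrightarrow> (\<forall>s. 2 \<le> s \<longrightarrow> \<zeta> * e (s - 1) r \<le> e s r)"
        and t: "Suc c \<le> t"
      have ed': "\<And>s i j. 2 \<le> s \<Longrightarrow> (j, i) \<in> E \<Longrightarrow> \<zeta> * e (s - 1) j \<le> e s i \<and> \<zeta> * e (s - 2) j \<le> e s i"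
        using ed by blast
      note W = walkF[where e=e and \<zeta>=\<zeta> and B="e 1 r" and E=E, OF z B ed]
      have Q1: "\<zeta> ^ 1 * e 1 r \<le> e 1 r" using z B by (simp add: mult_left_le_one_le)
      show "\<zeta> ^ t * e 1 r \<le> e t r" using t
      proof (induction t rule: less_induct)
        case (less t)
        show ?case
        proof (cases "t \<le> 1 + 2 * c")
          case True
          show ?thesis using W[OF cyc[folded c_def] _ Q1] True less.prems by simp
        next
          case False
          have ih: "\<zeta> ^ (t - c) * e 1 r \<le> e (t - c) r" using less.IH[of "t - c"] False c_def by simp
          show ?thesis using W[OF cyc[folded c_def] _ ih] False c_def by simp
        qed
      qed
    qed
    then show ?thesis by (intro exI[of _ "Suc c"]) simp
  qed
  then obtain T0 where T0: "1 \<le> T0" "Q T0" by blast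
  define mi where "mi i = (SOME m. (r, i) \<in> E ^^ m)" for i
  have mi: "(r, i) \<in> E ^^ mi i" for i
  proof -
    have "(r, i) \<in> E\<^sup>*" using root by (rule spec)
    then have "\<exists>m. (r, i) \<in> E ^^ m" by (rule rtrancl_imp_relpow)
    then show ?thesis unfolding mi_def by (rule someI_ex)
  qed
  define Mx where "Mx = Max (range mi)"
  have Mx: "mi i \<le> Mx" for i unfolding Mx_def by (intro Max_ge) auto
  show ?thesis
  proof (intro exI[of _ "T0 + Mx"] conjI allI impI)
    show "1 \<le> T0 + Mx" using T0 by simp
    fix e :: "nat \<Rightarrow> 'v \<Rightarrow> real" and \<zeta> :: real and i and t :: nat
    assume z: "0 < \<zeta>" "\<zeta> \<le> 1" and B: "0 \<le> e 1 r"
      and ed: "\<forall>s i j. 2 \<le> s \<longrightarrow> (j, i) \<in> E \<longrightarrow> \<zeta> * e (s - 1) j \<le> e s i \<and> \<zeta> * e (s - 2) j \<le> e s i"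
      and own: "in_nbrs E r = {} \<longrightarrow> (\<forall>s. 2 \<le> s \<longrightarrow> \<zeta> * e (s - 1) r \<le> e s r)"
      and t: "T0 + Mx \<le> t"
    have H: "0 < \<zeta> \<longrightarrow> \<zeta> \<le> 1 \<longrightarrow> 0 \<le> e 1 r \<longrightarrow>
     (\<forall>s i j. 2 \<le> s \<longrightarrow> (j, i) \<in> E \<longrightarrow> \<zeta> * e (s - 1) j \<le> e s i \<and> \<zeta> * e (s - 2) j \<le> e s i) \<longrightarrow>
     (in_nbrs E r = {} \<longrightarrow> (\<forall>s. 2 \<le> s \<longrightarrow> \<zeta> * e (s - 1) r \<le> e s r)) \<longrightarrow>
     (\<forall>t. T0 \<le> t \<longrightarrow> \<zeta> ^ t * e 1 r \<le> e t r)"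
      using T0(2)[unfolded Q_def, THEN spec[of _ e], THEN spec[of _ \<zeta>]] .
    have QQ: "\<forall>t. T0 \<le> t \<longrightarrow> \<zeta> ^ t * e 1 r \<le> e t r" using H z B ed own by blast
    have ed': "\<And>s i j. 2 \<le> s \<Longrightarrow> (j, i) \<in> E \<Longrightarrow> \<zeta> * e (s - 1) j \<le> e s i \<and> \<zeta> * e (s - 2) j \<le> e s i"
      using ed by blast
    note W = walkF[where e=e and \<zeta>=\<zeta> and B="e 1 r" and E=E, OF z B ed]
    have t0: "T0 \<le> t - mi i" using t Mx[of i] by simp
    have q: "\<zeta> ^ (t - mi i) * e 1 r \<le> e (t - mi i) r" using QQ t0 by blast
    show "\<zeta> ^ t * e 1 r \<le> e t i" using W[OF mi[of i] _ q] t0 T0(1) t Mx[of i] by simp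
  qed
qed


context net begin

lemma M_f0: "f = 0 \<Longrightarrow> M = {}" using Mcard by simp

lemma U_f0: "f = 0 \<Longrightarrow> U k i = in_nbrs E i"
proof -
  assume f0: "f = 0"
  then have i: "i \<notin> M" using M_f0 by simp
  obtain A B where L: "ignored_large (in_nbrs E i) (\<lambda>j. x k j - x k i) f A"
    and S: "ignored_small (in_nbrs E i) (\<lambda>j. x k j - x k i) f B" and R: "RR k i = A \<union> B"
    using RR[OF i, of k] unfolding dpmsr_ignored_def by blast
  have "A = {}" using f0_empty_large[of _ _ A] L f0 by simp
  moreover have "B = {}" using f0_empty_small[of _ _ B] S f0 by simp
  ultimately show ?thesis unfolding U_def R by simp
qed

lemma edge_lo:
  assumes f0: "f = 0" and k: "k0 \<le> k" and ji: "(j, i) \<in> E"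
  shows "eta * (x (Suc k) j - wk k0) \<le> x (Suc (Suc k)) i - wk k0 \<and>
         eta * (x k j - wk k0) \<le> x (Suc (Suc k)) i - wk k0"
proof -
  have i: "i \<notin> M" using M_f0[OF f0] by simp
  have W1: "\<forall>j. j \<notin> M \<longrightarrow> wk k0 \<le> x (Suc k) j" using window_all k by auto
  have W0: "\<forall>j. j \<notin> M \<longrightarrow> wk k0 \<le> x k j" using window_all k by auto
  have jN: "j \<in> in_nbrs E i" using ji unfolding in_nbrs_def by simp
  have j1: "j \<in> U (Suc k) i" and j0: "j \<in> U k i" using U_f0[OF f0] jN by auto
  have aj: "eta \<le> h * a i j" unfolding eta_def using h_pos a_ge[OF jN] by (intro mult_left_mono) auto
  have n1: "0 \<le> x (Suc k) j - wk k0" and n0: "0 \<le> x k j - wk k0"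
    using W1 W0 M_f0[OF f0] by auto
  have "eta * (x (Suc k) j - wk k0) \<le> h * a i j * (x (Suc k) j - wk k0)"
    using aj n1 by (rule mult_right_mono)
  moreover have "eta * (x k j - wk k0) \<le> h * a i j * (x k j - wk k0)"
    using aj n0 by (rule mult_right_mono)
  ultimately show ?thesis using lower_bound(3)[OF i W1 W0 j1] lower_bound(4)[OF i W1 W0 j0] by simp
qed

lemma edge_hi:
  assumes f0: "f = 0" and k: "k0 \<le> k" and ji: "(j, i) \<in> E"
  shows "eta * (Wk k0 - x (Suc k) j) \<le> Wk k0 - x (Suc (Suc k)) i \<and>
         eta * (Wk k0 - x k j) \<le> Wk k0 - x (Suc (Suc k)) i"
proof -
  have i: "i \<notin> M" using M_f0[OF f0] by simp
  have W1: "\<forall>j. j \<notin> M \<longrightarrow> x (Suc k) j \<le> Wk k0" using window_all k by auto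
  have W0: "\<forall>j. j \<notin> M \<longrightarrow> x k j \<le> Wk k0" using window_all k by auto
  have jN: "j \<in> in_nbrs E i" using ji unfolding in_nbrs_def by simp
  have j1: "j \<in> U (Suc k) i" and j0: "j \<in> U k i" using U_f0[OF f0] jN by auto
  have aj: "eta \<le> h * a i j" unfolding eta_def using h_pos a_ge[OF jN] by (intro mult_left_mono) auto
  have n1: "0 \<le> Wk k0 - x (Suc k) j" and n0: "0 \<le> Wk k0 - x k j"
    using W1 W0 M_f0[OF f0] by auto
  have "eta * (Wk k0 - x (Suc k) j) \<le> h * a i j * (Wk k0 - x (Suc k) j)"
    using aj n1 by (rule mult_right_mono)
  moreover have "eta * (Wk k0 - x k j) \<le> h * a i j * (Wk k0 - x k j)"
    using aj n0 by (rule mult_right_mono)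
  ultimately show ?thesis using upper_bound(3)[OF i W1 W0 j1] upper_bound(4)[OF i W1 W0 j0] by simp
qed

lemma own_lo:
  assumes f0: "f = 0" and k: "k0 \<le> k" and e: "in_nbrs E i = {}"
  shows "eta * (x (Suc k) i - wk k0) \<le> x (Suc (Suc k)) i - wk k0"
proof -
  have i: "i \<notin> M" using M_f0[OF f0] by simp
  have W1: "\<forall>j. j \<notin> M \<longrightarrow> wk k0 \<le> x (Suc k) j" using window_all k by auto
  have W0: "\<forall>j. j \<notin> M \<longrightarrow> wk k0 \<le> x k j" using window_all k by auto
  have "sig (Suc k) i = 0" unfolding sig_def U_f0[OF f0] e by simp
  then have p: "eta \<le> p1 (Suc k) i" unfolding p1_def using p1_base eta_le_h by simp
  have n1: "0 \<le> x (Suc k) i - wk k0" using W1 i by auto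
  have "eta * (x (Suc k) i - wk k0) \<le> p1 (Suc k) i * (x (Suc k) i - wk k0)"
    using p n1 by (rule mult_right_mono)
  then show ?thesis using lower_bound(1)[OF i W1 W0] by simp
qed

lemma own_hi:
  assumes f0: "f = 0" and k: "k0 \<le> k" and e: "in_nbrs E i = {}"
  shows "eta * (Wk k0 - x (Suc k) i) \<le> Wk k0 - x (Suc (Suc k)) i"
proof -
  have i: "i \<notin> M" using M_f0[OF f0] by simp
  have W1: "\<forall>j. j \<notin> M \<longrightarrow> x (Suc k) j \<le> Wk k0" using window_all k by auto
  have W0: "\<forall>j. j \<notin> M \<longrightarrow> x k j \<le> Wk k0" using window_all k by auto
  have "sig (Suc k) i = 0" unfolding sig_def U_f0[OF f0] e by simp
  then have p: "eta \<le> p1 (Suc k) i" unfolding p1_def using p1_base eta_le_h by simp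
  have n1: "0 \<le> Wk k0 - x (Suc k) i" using W1 i by auto
  have "eta * (Wk k0 - x (Suc k) i) \<le> p1 (Suc k) i * (Wk k0 - x (Suc k) i)"
    using p n1 by (rule mult_right_mono)
  then show ?thesis using upper_bound(1)[OF i W1 W0] by simp
qed

lemma contr_f0:
  assumes f0: "f = 0" and rob: "rs_robust E (f + 1) (f + 1)"
  shows "\<exists>N\<ge>1. \<forall>k0. Wk (k0 + N) - wk (k0 + N) \<le> (1 - eta ^ Suc N / 2) * (Wk k0 - wk k0)"
proof -
  have rob1: "rs_robust E 1 1" using rob f0 by simp
  obtain r where root: "\<forall>i. (r, i) \<in> E\<^sup>*" using root_exists[OF rob1] by blast
  obtain N where N1: "1 \<le> N" and NP: "\<forall>(e :: nat \<Rightarrow> 'v \<Rightarrow> real) \<zeta>. 0 < \<zeta> \<longrightarrow> \<zeta> \<le> 1 \<longrightarrow> 0 \<le> e 1 r \<longrightarrow>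
     (\<forall>s i j. 2 \<le> s \<longrightarrow> (j, i) \<in> E \<longrightarrow> \<zeta> * e (s - 1) j \<le> e s i \<and> \<zeta> * e (s - 2) j \<le> e s i) \<longrightarrow>
     (in_nbrs E r = {} \<longrightarrow> (\<forall>s. 2 \<le> s \<longrightarrow> \<zeta> * e (s - 1) r \<le> e s r)) \<longrightarrow>
     (\<forall>i t. N \<le> t \<longrightarrow> \<zeta> ^ t * e 1 r \<le> e t i)"
    using all_lift[OF root] by blast
  have M0: "M = {}" using M_f0[OF f0] .
  have main: "Wk (k0 + N) - wk (k0 + N) \<le> (1 - eta ^ Suc N / 2) * (Wk k0 - wk k0)" for k0
  proof -
    define W where "W = Wk k0"
    define w where "w = wk k0"
    define D where "D = W - w"
    have endW: "Wk (k0 + N) \<le> W" unfolding W_def using Wk_decseq by (simp add: decseq_def)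
    have endw: "w \<le> wk (k0 + N)" unfolding w_def using wk_incseq by (simp add: incseq_def)
    have win: "\<And>t i. w \<le> x (k0 + t) i \<and> x (k0 + t) i \<le> W"
      unfolding w_def W_def using window_all M0 by simp
    define e1 where "e1 t i = x (k0 + t) i - w" for t i
    define e2 where "e2 t i = W - x (k0 + t) i" for t i
    have z: "0 < eta" "eta \<le> 1" using eta_pos eta_le1 by auto
    have sdec: "\<exists>s'. s = Suc (Suc s') \<and> k0 + s - 1 = Suc (k0 + s') \<and> k0 + s - 2 = k0 + s' \<and> k0 + s = Suc (Suc (k0 + s'))"
      if "2 \<le> s" for s :: nat
      using that by (intro exI[of _ "s - 2"]) auto
    have ed1: "\<forall>s i j. 2 \<le> s \<longrightarrow> (j, i) \<in> E \<longrightarrow> eta * e1 (s - 1) j \<le> e1 s i \<and> eta * e1 (s - 2) j \<le> e1 s i"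
    proof (intro allI impI)
      fix s i j assume s: "2 \<le> (s::nat)" and ji: "(j, i) \<in> E"
      obtain s' where s': "s = Suc (Suc s')" using sdec[OF s] by blast
      have "k0 + (s - 1) = Suc (k0 + s')" "k0 + (s - 2) = k0 + s'" "k0 + s = Suc (Suc (k0 + s'))" using s' by auto
      then show "eta * e1 (s - 1) j \<le> e1 s i \<and> eta * e1 (s - 2) j \<le> e1 s i"
        unfolding e1_def w_def using edge_lo[OF f0 _ ji, of k0 "k0 + s'"] by simp
    qed
    have ed2: "\<forall>s i j. 2 \<le> s \<longrightarrow> (j, i) \<in> E \<longrightarrow> eta * e2 (s - 1) j \<le> e2 s i \<and> eta * e2 (s - 2) j \<le> e2 s i"
    proof (intro allI impI)
      fix s i j assume s: "2 \<le> (s::nat)" and ji: "(j, i) \<in> E"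
      obtain s' where s': "s = Suc (Suc s')" using sdec[OF s] by blast
      have "k0 + (s - 1) = Suc (k0 + s')" "k0 + (s - 2) = k0 + s'" "k0 + s = Suc (Suc (k0 + s'))" using s' by auto
      then show "eta * e2 (s - 1) j \<le> e2 s i \<and> eta * e2 (s - 2) j \<le> e2 s i"
        unfolding e2_def W_def using edge_hi[OF f0 _ ji, of k0 "k0 + s'"] by simp
    qed
    have ow1: "in_nbrs E r = {} \<longrightarrow> (\<forall>s. 2 \<le> s \<longrightarrow> eta * e1 (s - 1) r \<le> e1 s r)"
    proof (intro impI allI)
      fix s assume e: "in_nbrs E r = {}" and s: "2 \<le> (s::nat)"
      obtain s' where s': "s = Suc (Suc s')" using sdec[OF s] by blast
      have "k0 + (s - 1) = Suc (k0 + s')" "k0 + s = Suc (Suc (k0 + s'))" using s' by auto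
      then show "eta * e1 (s - 1) r \<le> e1 s r"
        unfolding e1_def w_def using own_lo[OF f0 _ e, of k0 "k0 + s'"] by simp
    qed
    have ow2: "in_nbrs E r = {} \<longrightarrow> (\<forall>s. 2 \<le> s \<longrightarrow> eta * e2 (s - 1) r \<le> e2 s r)"
    proof (intro impI allI)
      fix s assume e: "in_nbrs E r = {}" and s: "2 \<le> (s::nat)"
      obtain s' where s': "s = Suc (Suc s')" using sdec[OF s] by blast
      have "k0 + (s - 1) = Suc (k0 + s')" "k0 + s = Suc (Suc (k0 + s'))" using s' by auto
      then show "eta * e2 (s - 1) r \<le> e2 s r"
        unfolding e2_def W_def using own_hi[OF f0 _ e, of k0 "k0 + s'"] by simp
    qed
    have B1: "0 \<le> e1 1 r" and B2: "0 \<le> e2 1 r" unfolding e1_def e2_def using win[of 1 r] by auto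
    have R1: "\<forall>i t. N \<le> t \<longrightarrow> eta ^ t * e1 1 r \<le> e1 t i"
      using NP[THEN spec[of _ e1], THEN spec[of _ eta]] z B1 ed1 ow1 by blast
    have R2: "\<forall>i t. N \<le> t \<longrightarrow> eta ^ t * e2 1 r \<le> e2 t i"
      using NP[THEN spec[of _ e2], THEN spec[of _ eta]] z B2 ed2 ow2 by blast
    have pw: "eta ^ Suc N \<le> eta ^ N" using z by (intro power_decreasing) auto
    have pw0: "0 \<le> eta ^ Suc N" using z by simp
    have sum: "e1 1 r + e2 1 r = D" unfolding e1_def e2_def D_def by simp
    have key: "Wk (k0 + N) - wk (k0 + N) \<le> D - eta ^ Suc N * (D / 2)"
    proof (cases "D / 2 \<le> e1 1 r")
      case True
      have lb: "eta ^ Suc N * (D / 2) \<le> e1 t i" if "t = N \<or> t = Suc N" for t i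
      proof -
        have "eta ^ Suc N * (D / 2) \<le> eta ^ Suc N * e1 1 r" using True pw0 by (rule mult_left_mono)
        also have "\<dots> \<le> eta ^ t * e1 1 r" using that pw B1 by (auto intro: mult_right_mono)
        also have "\<dots> \<le> e1 t i"
        proof -
          have "N \<le> t" using that by auto
          then show ?thesis using R1 by blast
        qed
        finally show ?thesis .
      qed
      have "w + eta ^ Suc N * (D / 2) \<le> minN (k0 + N)"
        unfolding minN_ge_iff using lb[of N] unfolding e1_def by (simp add: algebra_simps)
      moreover have "w + eta ^ Suc N * (D / 2) \<le> minN (Suc (k0 + N))"
        unfolding minN_ge_iff using lb[of "Suc N"] unfolding e1_def by (simp add: algebra_simps)
      ultimately have "w + eta ^ Suc N * (D / 2) \<le> wk (k0 + N)" unfolding wk_def by simp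
      then show ?thesis using endW unfolding D_def by simp
    next
      case False
      then have True': "D / 2 \<le> e2 1 r" using sum by simp
      have lb: "eta ^ Suc N * (D / 2) \<le> e2 t i" if "t = N \<or> t = Suc N" for t i
      proof -
        have "eta ^ Suc N * (D / 2) \<le> eta ^ Suc N * e2 1 r" using True' pw0 by (rule mult_left_mono)
        also have "\<dots> \<le> eta ^ t * e2 1 r" using that pw B2 by (auto intro: mult_right_mono)
        also have "\<dots> \<le> e2 t i"
        proof -
          have "N \<le> t" using that by auto
          then show ?thesis using R2 by blast
        qed
        finally show ?thesis .
      qed
      have "maxN (k0 + N) \<le> W - eta ^ Suc N * (D / 2)"
        unfolding maxN_le_iff using lb[of N] unfolding e2_def by (simp add: algebra_simps)
      moreover have "maxN (Suc (k0 + N)) \<le> W - eta ^ Suc N * (D / 2)"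
        unfolding maxN_le_iff using lb[of "Suc N"] unfolding e2_def by (simp add: algebra_simps)
      ultimately have "Wk (k0 + N) \<le> W - eta ^ Suc N * (D / 2)" unfolding Wk_def by simp
      then show ?thesis using endw unfolding D_def by simp
    qed
    have "D - eta ^ Suc N * (D / 2) = (1 - eta ^ Suc N / 2) * D" by (simp add: algebra_simps)
    then show ?thesis using key unfolding D_def W_def w_def by simp
  qed
  show ?thesis using N1 main by blast
qed

end


context net begin

lemma suff:
  assumes rob: "rs_robust E (f + 1) (f + 1)"
  shows "safe_agree M x v (safety_interval M \<alpha> T (x 0) (v 0))"
proof -
  have pl: "eta ^ m \<le> 1" for m by (rule power_le_one) (use eta_pos eta_le1 in auto)
  have "\<exists>N \<delta>. N > 0 \<and> 0 < \<delta> \<and> \<delta> \<le> 1 \<and> (\<forall>k. Wk (k + N) - wk (k + N) \<le> (1 - \<delta>) * (Wk k - wk k))"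
  proof (cases "f \<ge> 1")
    case True
    have p: "eta ^ Suc (2 * CARD('v)) \<le> 1" "0 < eta ^ Suc (2 * CARD('v))"
      using eta_pos pl[of "Suc (2 * CARD('v))"] by auto
    show ?thesis
      using contr_f1[OF True rob] p
      by (intro exI[of _ "Suc (2 * CARD('v))"] exI[of _ "eta ^ Suc (2 * CARD('v)) / 2"]) auto
  next
    case False
    then have f0: "f = 0" by simp
    obtain N where N: "N \<ge> 1" "\<forall>k0. Wk (k0 + N) - wk (k0 + N) \<le> (1 - eta ^ Suc N / 2) * (Wk k0 - wk k0)"
      using contr_f0[OF f0 rob] by blast
    have p: "eta ^ Suc N \<le> 1" "0 < eta ^ Suc N"
      using eta_pos pl[of "Suc N"] by auto
    show ?thesis using N p
      by (intro exI[of _ N] exI[of _ "eta ^ Suc N / 2"]) auto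
  qed
  then obtain N \<delta> where N: "N > 0" "0 < \<delta>" "\<delta> \<le> 1" "\<forall>k. Wk (k + N) - wk (k + N) \<le> (1 - \<delta>) * (Wk k - wk k)"
    by blast
  obtain c where c: "c \<in> {wk 0..Wk 0}" "\<forall>i. i \<notin> M \<longrightarrow> (\<lambda>k. x k i) \<longlonglongrightarrow> c \<and> (\<lambda>k. v k i) \<longlonglongrightarrow> 0"
    using agree_from_contr[OF N] by blast
  have SI: "\<exists>lo hi. safety_interval M \<alpha> T (x 0) (v 0) = {lo..hi}" unfolding safety_interval_def by blast
  show ?thesis unfolding safe_agree_def
  proof (intro conjI)
    show "bounded (safety_interval M \<alpha> T (x 0) (v 0))" using SI by auto
    show "is_interval (safety_interval M \<alpha> T (x 0) (v 0))" using SI by auto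
    show "\<forall>k i. i \<notin> M \<longrightarrow> x k i \<in> safety_interval M \<alpha> T (x 0) (v 0)"
      using safety safety_window by blast
    show "\<exists>c\<in>safety_interval M \<alpha> T (x 0) (v 0). \<forall>i. i \<notin> M \<longrightarrow> (\<lambda>k. x k i) \<longlonglongrightarrow> c \<and> (\<lambda>k. v k i) \<longlonglongrightarrow> 0"
      using c safety_window by blast
  qed
qed

end

lemma zero_used:
  assumes fin: "finite N" and L: "ignored_large N g f A" and S: "ignored_small N g f B"
    and c: "card {l \<in> N. g l \<noteq> 0} \<le> f" and l: "l \<in> N" "l \<notin> A \<union> B"
  shows "g l = 0"
proof (rule ccontr)
  assume nz: "g l \<noteq> 0"
  have finA: "finite A" using fin large_sub[OF L] finite_subset by blast
  have finB: "finite B" using fin small_sub[OF S] finite_subset by blast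
  show False
  proof (cases "g l > 0")
    case True
    have u: "card A = f \<and> (\<forall>a\<in>A. g l \<le> g a)" using large_used[OF L l(1)] l True by auto
    have "insert l A \<subseteq> {l \<in> N. g l \<noteq> 0}" using u True l large_sub[OF L] by force
    then have "card (insert l A) \<le> card {l \<in> N. g l \<noteq> 0}" using fin by (intro card_mono) auto
    moreover have "card (insert l A) = Suc f" using u l finA by simp
    ultimately show False using c by simp
  next
    case False
    then have neg: "g l < 0" using nz by simp
    have u: "card B = f \<and> (\<forall>b\<in>B. g b \<le> g l)" using small_used[OF S l(1)] l neg by auto
    have "insert l B \<subseteq> {l \<in> N. g l \<noteq> 0}" using u neg l small_sub[OF S] by force
    then have "card (insert l B) \<le> card {l \<in> N. g l \<noteq> 0}" using fin by (intro card_mono) auto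
    moreover have "card (insert l B) = Suc f" using u l finB by simp
    ultimately show False using c by simp
  qed
qed

lemma nec:
  fixes E :: "('v::finite \<times> 'v) set" and a :: "'v \<Rightarrow> 'v \<Rightarrow> real"
  assumes nr: "\<not> rs_robust E (f + 1) (f + 1)"
  shows "\<not> resilient_consensus_total E a f \<alpha> T"
proof
  assume rc: "resilient_consensus_total E a f \<alpha> T"
  obtain S1 S2 where S: "S1 \<noteq> {}" "S2 \<noteq> {}" "S1 \<inter> S2 = {}"
    "reach_set E (f + 1) S1 \<noteq> S1" "reach_set E (f + 1) S2 \<noteq> S2"
    "card (reach_set E (f + 1) S1) + card (reach_set E (f + 1) S2) < f + 1"
    using nr unfolding rs_robust_def by (auto simp: not_le)
  define r1 where "r1 = reach_set E (f + 1) S1"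
  define r2 where "r2 = reach_set E (f + 1) S2"
  have r1S: "r1 \<subseteq> S1" and r2S: "r2 \<subseteq> S2" unfolding r1_def r2_def reach_set_def by auto
  define M where "M = r1 \<union> r2"
  have cM: "card M \<le> f"
  proof -
    have "card M \<le> card r1 + card r2" unfolding M_def by (rule card_Un_le)
    then show ?thesis using S(6) unfolding r1_def r2_def by simp
  qed
  obtain i1 where i1: "i1 \<in> S1" "i1 \<notin> r1" using S(4) r1S unfolding r1_def by blast
  obtain i2 where i2: "i2 \<in> S2" "i2 \<notin> r2" using S(5) r2S unfolding r2_def by blast
  have i1M: "i1 \<notin> M" using i1 S(3) r2S unfolding M_def by blast
  have i2M: "i2 \<notin> M" using i2 S(3) r1S unfolding M_def by blast
  have MU: "M \<noteq> UNIV" using i1M by blast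
  have few1: "card {l. (l, j) \<in> E \<and> l \<notin> S1} \<le> f" if "j \<in> S1" "j \<notin> M" for j
    using that unfolding M_def r1_def reach_set_def by auto
  have few2: "card {l. (l, j) \<in> E \<and> l \<notin> S2} \<le> f" if "j \<in> S2" "j \<notin> M" for j
    using that unfolding M_def r2_def reach_set_def by auto
  define x0 where "x0 j = (if j \<in> S2 then 1 else 0 :: real)" for j
  define Rsel where "Rsel xk i = (SOME R. dpmsr_ignored E f xk i R)" for xk and i :: 'v
  have Rsel: "dpmsr_ignored E f xk i (Rsel xk i)" for xk i
    unfolding Rsel_def by (rule someI_ex) (rule dpmsr_exists)
  define ctrl where "ctrl xk vk i = (if i \<in> M then 0 else
      - (\<Sum>j \<in> in_nbrs E i - Rsel xk i. a i j * (xk i - xk j)) - \<alpha> * vk i)" for xk vk and i :: 'v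
  define step where "step p = (\<lambda>i. fst p i + T * snd p i + T\<^sup>2 / 2 * ctrl (fst p) (snd p) i,
                                 \<lambda>i. snd p i + T * ctrl (fst p) (snd p) i)" for p :: "('v \<Rightarrow> real) \<times> ('v \<Rightarrow> real)"
  define st where "st = rec_nat (x0, \<lambda>_. 0) (\<lambda>k p. step p)"
  have st0: "st 0 = (x0, \<lambda>_. 0)" and stS: "st (Suc k) = step (st k)" for k unfolding st_def by simp_all
  define xx where "xx k = fst (st k)" for k
  define vv where "vv k = snd (st k)" for k
  have ex: "execution E a f \<alpha> T M xx vv"
    unfolding execution_def
  proof (intro allI)
    fix k i
    show "\<exists>u. xx (Suc k) i = xx k i + T * vv k i + T\<^sup>2 / 2 * u \<and> vv (Suc k) i = vv k i + T * u \<and>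
        (i \<notin> M \<longrightarrow> (\<exists>R. dpmsr_ignored E f (xx k) i R \<and>
            u = - (\<Sum>j \<in> in_nbrs E i - R. a i j * (xx k i - xx k j)) - \<alpha> * vv k i))"
      using Rsel[of "xx k" i]
      by (intro exI[of _ "ctrl (xx k) (vv k) i"]) (auto simp: xx_def vv_def stS step_def ctrl_def)
  qed
  have zero_ctrl: "ctrl (xx k) (vv k) j = 0"
    if vals: "\<forall>l\<in>S. xx k l = c" and vz: "vv k j = 0" and jS: "j \<in> S"
       and few: "j \<notin> M \<Longrightarrow> card {l. (l, j) \<in> E \<and> l \<notin> S} \<le> f" for k j S c
  proof (cases "j \<in> M")
    case True then show ?thesis unfolding ctrl_def by simp
  next
    case False
    obtain A B where L: "ignored_large (in_nbrs E j) (\<lambda>l. xx k l - xx k j) f A"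
      and Sm: "ignored_small (in_nbrs E j) (\<lambda>l. xx k l - xx k j) f B" and R: "Rsel (xx k) j = A \<union> B"
      using Rsel[of "xx k" j] unfolding dpmsr_ignored_def by blast
    have sub: "{l \<in> in_nbrs E j. xx k l - xx k j \<noteq> 0} \<subseteq> {l. (l, j) \<in> E \<and> l \<notin> S}"
      using vals jS unfolding in_nbrs_def by auto
    have c: "card {l \<in> in_nbrs E j. xx k l - xx k j \<noteq> 0} \<le> f"
      using card_mono[OF _ sub] few[OF False] by (meson finite order_trans)
    have "\<forall>l \<in> in_nbrs E j - Rsel (xx k) j. a j l * (xx k j - xx k l) = 0"
    proof
      fix l assume l: "l \<in> in_nbrs E j - Rsel (xx k) j"
      have "xx k l - xx k j = 0" using zero_used[OF _ L Sm c] l R by auto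
      then show "a j l * (xx k j - xx k l) = 0" by simp
    qed
    then have "(\<Sum>l \<in> in_nbrs E j - Rsel (xx k) j. a j l * (xx k j - xx k l)) = 0" by (rule sum.neutral)
    then show ?thesis unfolding ctrl_def using False vz by simp
  qed
  have inv: "(\<forall>j\<in>S1. xx k j = 0 \<and> vv k j = 0) \<and> (\<forall>j\<in>S2. xx k j = 1 \<and> vv k j = 0)" for k
  proof (induction k)
    case 0
    show ?case using S(3) unfolding xx_def vv_def st0 x0_def by auto
  next
    case (Suc k)
    have v1: "\<forall>l\<in>S1. xx k l = 0" and v2: "\<forall>l\<in>S2. xx k l = 1" using Suc.IH by auto
    have c1: "ctrl (xx k) (vv k) j = 0" if "j \<in> S1" for j
      using zero_ctrl[OF v1 _ that few1[OF that]] Suc.IH that by auto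
    have c2: "ctrl (xx k) (vv k) j = 0" if "j \<in> S2" for j
      using zero_ctrl[OF v2 _ that few2[OF that]] Suc.IH that by auto
    show ?case
    proof (intro conjI ballI)
      fix j assume j: "j \<in> S1"
      show "xx (Suc k) j = 0" using c1[OF j] Suc.IH j
        unfolding xx_def vv_def stS step_def by (simp add: xx_def[symmetric] vv_def[symmetric])
      show "vv (Suc k) j = 0" using c1[OF j] Suc.IH j
        unfolding xx_def vv_def stS step_def by (simp add: xx_def[symmetric] vv_def[symmetric])
    next
      fix j assume j: "j \<in> S2"
      show "xx (Suc k) j = 1" using c2[OF j] Suc.IH j
        unfolding xx_def vv_def stS step_def by (simp add: xx_def[symmetric] vv_def[symmetric])
      show "vv (Suc k) j = 0" using c2[OF j] Suc.IH j
        unfolding xx_def vv_def stS step_def by (simp add: xx_def[symmetric] vv_def[symmetric])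
    qed
  qed
  obtain SF where SF: "\<forall>M. M \<noteq> UNIV \<and> card M \<le> f \<longrightarrow>
          (\<forall>x v. execution E a f \<alpha> T M x v \<longrightarrow>
             safe_agree M x v (SF M (normal_part M (x 0)) (normal_part M (v 0))))"
    using rc unfolding resilient_consensus_total_def by blast
  have "safe_agree M xx vv (SF M (normal_part M (xx 0)) (normal_part M (vv 0)))"
    using SF MU cM ex by blast
  then obtain c where c: "\<forall>i. i \<notin> M \<longrightarrow> (\<lambda>k. xx k i) \<longlonglongrightarrow> c"
    unfolding safe_agree_def by blast
  have "(\<lambda>k. xx k i1) = (\<lambda>k. 0)" using inv i1 by auto
  then have "c = 0" using c i1M LIMSEQ_unique[OF tendsto_const] by metis
  moreover have "(\<lambda>k. xx k i2) = (\<lambda>k. 1)" using inv i2 by auto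
  then have "c = 1" using c i2M LIMSEQ_unique[OF tendsto_const] by metis
  ultimately show False by simp
qed


lemma safety_interval_normal:
  "safety_interval M \<alpha> T (normal_part M x0) (normal_part M v0) = safety_interval M \<alpha> T x0 v0"
proof -
  have "{normal_part M x0 i | i. i \<notin> M} = {x0 i | i. i \<notin> M}" unfolding normal_part_def by auto
  moreover have "{(T - \<alpha> * T\<^sup>2 / 2) * normal_part M v0 i | i. i \<notin> M} = {(T - \<alpha> * T\<^sup>2 / 2) * v0 i | i. i \<notin> M}"
    unfolding normal_part_def by auto
  ultimately show ?thesis unfolding safety_interval_def by simp
qed

theorem theorem1:
  fixes E :: "('v::finite \<times> 'v) set"
    and a :: "'v \<Rightarrow> 'v \<Rightarrow> real"
    and \<gamma> T \<alpha> :: real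
    and f :: nat
  assumes n_gt1: "CARD('v) > 1"
    and no_loops: "\<forall>i. (i, i) \<notin> E"
    and gamma_pos: "\<gamma> > 0"
    and weights: "\<forall>i j. (j, i) \<in> E \<longrightarrow> \<gamma> \<le> a i j \<and> a i j < 1"
    and weight_sum: "\<forall>i. (\<Sum>j \<in> in_nbrs E i. a i j) \<le> 1"
    and T_pos: "T > 0"
    and alpha_pos: "\<alpha> > 0"
    and cond_lo: "1 + T\<^sup>2 / 2 \<le> \<alpha> * T"
    and cond_hi: "\<alpha> * T \<le> 2 - T\<^sup>2 / 2"
  shows "(resilient_consensus_total E a f \<alpha> T \<longleftrightarrow> rs_robust E (f + 1) (f + 1)) \<and>
         (rs_robust E (f + 1) (f + 1) \<longrightarrow>
            (\<forall>M. M \<noteq> UNIV \<and> card M \<le> f \<longrightarrow>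
               (\<forall>x v. execution E a f \<alpha> T M x v \<longrightarrow>
                  safe_agree M x v (safety_interval M \<alpha> T (x 0) (v 0)))))"
proof -
  have suffg: "safe_agree M x v (safety_interval M \<alpha> T (x 0) (v 0))"
    if rob: "rs_robust E (f + 1) (f + 1)" and M: "M \<noteq> UNIV" "card M \<le> f"
      and ex: "execution E a f \<alpha> T M x v" for M x v
  proof -
    interpret net E a \<gamma> T \<alpha> f M x v
      by unfold_locales (use gamma_pos weights weight_sum T_pos alpha_pos cond_lo cond_hi ex M in auto)
    show ?thesis by (rule suff[OF rob])
  qed
  have rc: "resilient_consensus_total E a f \<alpha> T" if rob: "rs_robust E (f + 1) (f + 1)"
    unfolding resilient_consensus_total_def
  proof (intro exI[of _ "\<lambda>M x0 v0. safety_interval M \<alpha> T x0 v0"] allI impI)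
    fix M x v assume M: "M \<noteq> UNIV \<and> card M \<le> f" and ex: "execution E a f \<alpha> T M x v"
    show "safe_agree M x v (safety_interval M \<alpha> T (normal_part M (x 0)) (normal_part M (v 0)))"
      unfolding safety_interval_normal using suffg[OF rob _ _ ex] M by blast
  qed
  have "resilient_consensus_total E a f \<alpha> T \<longleftrightarrow> rs_robust E (f + 1) (f + 1)"
    using rc nec[of E f a \<alpha> T] by blast
  moreover have "rs_robust E (f + 1) (f + 1) \<longrightarrow>
            (\<forall>M. M \<noteq> UNIV \<and> card M \<le> f \<longrightarrow>
               (\<forall>x v. execution E a f \<alpha> T M x v \<longrightarrow>
                  safe_agree M x v (safety_interval M \<alpha> T (x 0) (v 0))))"
    using suffg by blast
  ultimately show ?thesis by blast
qed

end
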